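(* Let $(M^n,c)$ be a conformal Riemannian manifold with $n\ge3$, fix $m\in\mathbb{R}$, and let $u,v\in\mathcal{E}[1]$ satisfy, in a scale $g\in c$ (regarding $u,v$ as functions) and for some constants $\lambda,\mu$: $0=\big(uv\,\mathrm{Ric}+(m+n-2)v\nabla^2u-mu\nabla^2v\big)_0$, $n\lambda v^2=(uv)^2R+(m+2n-2)uv^2\Delta u-mu^2v\Delta v-(m+n-1)nv^2|\nabla u|^2+mnuv\langle\nabla u,\nabla v\rangle$, $n\mu u^2=(uv)^2R+(m+n-2)uv^2\Delta u-(m-n)u^2v\Delta v-(m+n-2)nuv\langle\nabla u,\nabla v\rangle+n(m-1)u^2|\nabla v|^2$, where $T_0=T-\frac1n(\operatorname{tr}_gT)g$. Then $I=\frac1n\mathbb{D}u$ and $J=\frac1n\mathbb{D}v$ form a quasi-Einstein pair, i.e. $0=(m+n-2)\langle X,J\rangle\nabla I-m\langle X,I\rangle\nabla J-\frac1n\big((m+n-2)\langle\nabla I,J\rangle-m\langle\nabla J,I\rangle\big)X$ and $0=mn(m+n-2)\langle I,J\rangle\big(\langle X,J\rangle\nabla\langle X,I\rangle-\langle X,I\rangle\nabla\langle X,J\rangle\big)-m(m+n-2)(2m+n-2)\langle X,I\rangle\langle X,J\rangle\nabla\langle I,J\rangle+2(m-1)(m+n-1)(m+n-2)\langle X,I\rangle\langle X,J\rangle\langle\nabla I,J\rangle+2m(m-1)(m+n-1)\langle X,I\rangle\langle X,J\rangle\langle\nabla J,I\rangle$.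
   Context: $(M^n,c)$ is a smooth manifold with a conformal class $c$ of Riemannian metrics. $\mathcal{E}[w]$ is the space of conformal densities of weight $w$: a scale $g\in c$ identifies a density with a function, and $g\mapsto e^{2s}g$ multiplies it by $e^{ws}$. The standard tractor bundle $\mathbb{T}$ is a rank $n+2$ bundle; a scale $g$ identifies $\mathbb{T}\cong\mathbb{R}\oplus TM\oplus\mathbb{R}$, and a tractor $I$ is written as a column with top component $\sigma$, middle $\omega$ (a vector field) and bottom $\rho$, which under $g\mapsto e^{2s}g$ change by $\sigma\mapsto e^s\sigma$, $\omega\mapsto e^{-s}(\omega+\sigma\nabla s)$, $\rho\mapsto e^{-s}(\rho-g(\nabla s,\omega)-\frac12|\nabla s|^2\sigma)$. The tractor metric is $\langle I,K\rangle$, with $\langle I,I\rangle=2\sigma\rho+|\omega|_g^2$. $X\in\mathcal{T}[1]$ has top and middle components $0$ and bottom component $1$, so $\langle X,I\rangle=\sigma$. $P=\frac{1}{n-2}(\mathrm{Ric}-\mathrm{J}g)$ is the Schouten tensor, $\mathrm{J}=\operatorname{tr}_gP$. The normal tractor connection $\nabla$ is, in a scale: $\nabla_xI$ has top $x\sigma-g(\omega,x)$, middle $\nabla_x\omega+\sigma P(x)+\rho x$ ($P(x)$ the vector dual to $P(x,\cdot)$), bottom $x\rho-P(x,\omega)$; it preserves the tractor metric. In the displayed tractor equations, $\nabla I$ is a tractor-valued one-form, $\langle\nabla I,J\rangle$ the one-form $x\mapsto\langle\nabla_xI,J\rangle$, and $\nabla\langle\cdot,\cdot\rangle$ the differential of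 a density. The tractor-$D$ operator $\mathbb{D}:\mathcal{E}[w]\to\mathcal{T}[w-1]$ is: top $w(n+2w-2)u$, middle $(n+2w-2)\nabla u$, bottom $-(\Delta u+w\mathrm{J}u)$, $\Delta=\operatorname{tr}_g\nabla^2$. *)

theory Defs
  imports "HOL-Analysis.Analysis"
begin

text \<open>Local-coordinate model: an open set U of real^'n (a coordinate chart of M),
  dimension n = CARD('n). A Riemannian metric in the chosen scale is given by its
  components g x i j. Tractors are written in the splitting determined by the scale g:
  (top sigma, middle vector components omega^b, bottom rho).\<close>

definition dimn :: "'n::finite itself \<Rightarrow> real" where
  "dimn _ = real CARD('n)"

definition pd :: "'n::finite \<Rightarrow> (real^'n \<Rightarrow> real) \<Rightarrow> real^'n \<Rightarrow> real" where
  "pd i f x = deriv (\<lambda>t. f (x + t *\<^sub>R axis i 1)) 0"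

fun ipd :: "'n::finite list \<Rightarrow> (real^'n \<Rightarrow> real) \<Rightarrow> real^'n \<Rightarrow> real" where
  "ipd [] f = f"
| "ipd (i # is) f = pd i (ipd is f)"

definition smooth_on :: "(real^'n::finite) set \<Rightarrow> (real^'n \<Rightarrow> real) \<Rightarrow> bool" where
  "smooth_on U f \<longleftrightarrow> (\<forall>is. continuous_on U (ipd is f) \<and>
      (\<forall>i. \<forall>x\<in>U. (\<lambda>t. ipd is f (x + t *\<^sub>R axis i 1)) differentiable (at 0)))"

definition riemannian_metric_on ::
  "(real^'n::finite) set \<Rightarrow> (real^'n \<Rightarrow> 'n \<Rightarrow> 'n \<Rightarrow> real) \<Rightarrow> bool" where
  "riemannian_metric_on U g \<longleftrightarrow>
     (\<forall>i j. smooth_on U (\<lambda>x. g x i j)) \<and>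
     (\<forall>x\<in>U. \<forall>i j. g x i j = g x j i) \<and>
     (\<forall>x\<in>U. \<forall>v::real^'n. v \<noteq> 0 \<longrightarrow> (\<Sum>i\<in>UNIV. \<Sum>j\<in>UNIV. g x i j * v$i * v$j) > 0)"

definition ginv :: "(real^'n::finite \<Rightarrow> 'n \<Rightarrow> 'n \<Rightarrow> real) \<Rightarrow> real^'n \<Rightarrow> 'n \<Rightarrow> 'n \<Rightarrow> real" where
  "ginv g x i j = matrix_inv (\<chi> a b. g x a b) $ i $ j"

definition chr :: "(real^'n::finite \<Rightarrow> 'n \<Rightarrow> 'n \<Rightarrow> real) \<Rightarrow> 'n \<Rightarrow> 'n \<Rightarrow> 'n \<Rightarrow> real^'n \<Rightarrow> real" where
  "chr g k i j x = (1/2) * (\<Sum>l\<in>UNIV. ginv g x k l *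
      (pd i (\<lambda>y. g y j l) x + pd j (\<lambda>y. g y i l) x - pd l (\<lambda>y. g y i j) x))"

definition ricci :: "(real^'n::finite \<Rightarrow> 'n \<Rightarrow> 'n \<Rightarrow> real) \<Rightarrow> 'n \<Rightarrow> 'n \<Rightarrow> real^'n \<Rightarrow> real" where
  "ricci g i j x = (\<Sum>k\<in>UNIV. pd k (chr g k i j) x - pd j (chr g k i k) x
      + (\<Sum>l\<in>UNIV. chr g k k l x * chr g l i j x - chr g k j l x * chr g l i k x))"

definition scal :: "(real^'n::finite \<Rightarrow> 'n \<Rightarrow> 'n \<Rightarrow> real) \<Rightarrow> real^'n \<Rightarrow> real" where
  "scal g x = (\<Sum>i\<in>UNIV. \<Sum>j\<in>UNIV. ginv g x i j * ricci g i j x)"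

definition Jfun :: "(real^'n::finite \<Rightarrow> 'n \<Rightarrow> 'n \<Rightarrow> real) \<Rightarrow> real^'n \<Rightarrow> real" where
  "Jfun g x = scal g x / (2 * (dimn TYPE('n) - 1))"

definition schouten :: "(real^'n::finite \<Rightarrow> 'n \<Rightarrow> 'n \<Rightarrow> real) \<Rightarrow> 'n \<Rightarrow> 'n \<Rightarrow> real^'n \<Rightarrow> real" where
  "schouten g i j x = (ricci g i j x - Jfun g x * g x i j) / (dimn TYPE('n) - 2)"

definition hess :: "(real^'n::finite \<Rightarrow> 'n \<Rightarrow> 'n \<Rightarrow> real) \<Rightarrow> (real^'n \<Rightarrow> real) \<Rightarrow> 'n \<Rightarrow> 'n \<Rightarrow> real^'n \<Rightarrow> real" where
  "hess g u i j x = pd i (pd j u) x - (\<Sum>k\<in>UNIV. chr g k i j x * pd k u x)"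

definition lap :: "(real^'n::finite \<Rightarrow> 'n \<Rightarrow> 'n \<Rightarrow> real) \<Rightarrow> (real^'n \<Rightarrow> real) \<Rightarrow> real^'n \<Rightarrow> real" where
  "lap g u x = (\<Sum>i\<in>UNIV. \<Sum>j\<in>UNIV. ginv g x i j * hess g u i j x)"

definition grad :: "(real^'n::finite \<Rightarrow> 'n \<Rightarrow> 'n \<Rightarrow> real) \<Rightarrow> (real^'n \<Rightarrow> real) \<Rightarrow> 'n \<Rightarrow> real^'n \<Rightarrow> real" where
  "grad g u b x = (\<Sum>c\<in>UNIV. ginv g x b c * pd c u x)"

definition ginner :: "(real^'n::finite \<Rightarrow> 'n \<Rightarrow> 'n \<Rightarrow> real) \<Rightarrow> (real^'n \<Rightarrow> real) \<Rightarrow> (real^'n \<Rightarrow> real) \<Rightarrow> real^'n \<Rightarrow> real" where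
  "ginner g u v x = (\<Sum>i\<in>UNIV. \<Sum>j\<in>UNIV. ginv g x i j * pd i u x * pd j v x)"

definition tracefree :: "(real^'n::finite \<Rightarrow> 'n \<Rightarrow> 'n \<Rightarrow> real) \<Rightarrow> ('n \<Rightarrow> 'n \<Rightarrow> real^'n \<Rightarrow> real) \<Rightarrow> 'n \<Rightarrow> 'n \<Rightarrow> real^'n \<Rightarrow> real" where
  "tracefree g T i j x = T i j x - (1 / dimn TYPE('n)) * (\<Sum>k\<in>UNIV. \<Sum>l\<in>UNIV. ginv g x k l * T k l x) * g x i j"

type_synonym 'n trac = "real \<times> ('n \<Rightarrow> real) \<times> real"
type_synonym 'n tfield = "(real^'n \<Rightarrow> real) \<times> ('n \<Rightarrow> real^'n \<Rightarrow> real) \<times> (real^'n \<Rightarrow> real)"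

definition tval :: "'n tfield \<Rightarrow> real^'n \<Rightarrow> 'n trac" where
  "tval F x = (fst F x, \<lambda>b. fst (snd F) b x, snd (snd F) x)"

definition tadd :: "'n trac \<Rightarrow> 'n trac \<Rightarrow> 'n trac" where
  "tadd A B = (fst A + fst B, \<lambda>b. fst (snd A) b + fst (snd B) b, snd (snd A) + snd (snd B))"

definition tscale :: "real \<Rightarrow> 'n trac \<Rightarrow> 'n trac" where
  "tscale c A = (c * fst A, \<lambda>b. c * fst (snd A) b, c * snd (snd A))"

definition tzero :: "'n trac" where
  "tzero = (0, \<lambda>b. 0, 0)"

definition Xtr :: "'n trac" where
  "Xtr = (0, \<lambda>b. 0, 1)"

definition fscale :: "real \<Rightarrow> 'n tfield \<Rightarrow> 'n tfield" where
  "fscale c F = (\<lambda>x. c * fst F x, \<lambda>b x. c * fst (snd F) b x, \<lambda>x. c * snd (snd F) x)"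

definition tmet :: "(real^'n::finite \<Rightarrow> 'n \<Rightarrow> 'n \<Rightarrow> real) \<Rightarrow> real^'n \<Rightarrow> 'n trac \<Rightarrow> 'n trac \<Rightarrow> real" where
  "tmet g x A B = fst A * snd (snd B) + snd (snd A) * fst B
      + (\<Sum>a\<in>UNIV. \<Sum>b\<in>UNIV. g x a b * fst (snd A) a * fst (snd B) b)"

definition tconn :: "(real^'n::finite \<Rightarrow> 'n \<Rightarrow> 'n \<Rightarrow> real) \<Rightarrow> 'n tfield \<Rightarrow> 'n \<Rightarrow> real^'n \<Rightarrow> 'n trac" where
  "tconn g F a x =
     (pd a (fst F) x - (\<Sum>b\<in>UNIV. g x a b * fst (snd F) b x),
      \<lambda>b. pd a (fst (snd F) b) x + (\<Sum>c\<in>UNIV. chr g b a c x * fst (snd F) c x)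
           + fst F x * (\<Sum>c\<in>UNIV. ginv g x b c * schouten g a c x)
           + snd (snd F) x * (if a = b then 1 else 0),
      pd a (snd (snd F)) x - (\<Sum>b\<in>UNIV. schouten g a b x * fst (snd F) b x))"

text \<open>Tractor-D operator on densities of weight w (identified with functions in the scale g).\<close>
definition tractorD :: "(real^'n::finite \<Rightarrow> 'n \<Rightarrow> 'n \<Rightarrow> real) \<Rightarrow> real \<Rightarrow> (real^'n \<Rightarrow> real) \<Rightarrow> 'n tfield" where
  "tractorD g w u =
     (\<lambda>x. w * (dimn TYPE('n) + 2 * w - 2) * u x,
      \<lambda>b x. (dimn TYPE('n) + 2 * w - 2) * grad g u b x,
      \<lambda>x. - (lap g u x + w * Jfun g x * u x))"

end

theory Submission
  imports Defs
begin


definition HD :: "'n::finite \<Rightarrow> (real^'n \<Rightarrow> real) \<Rightarrow> real^'n \<Rightarrow> real \<Rightarrow> bool" where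
  "HD i f x D \<longleftrightarrow> ((\<lambda>t. f (x + t *\<^sub>R axis i 1)) has_field_derivative D) (at 0)"

definition ld :: "'n::finite \<Rightarrow> (real^'n \<Rightarrow> real) \<Rightarrow> real^'n \<Rightarrow> bool" where
  "ld i f x \<longleftrightarrow> (\<lambda>t. f (x + t *\<^sub>R axis i 1)) differentiable (at 0)"

lemma pd_eqI: "HD i f x D \<Longrightarrow> pd i f x = D"
  unfolding HD_def pd_def by (rule DERIV_imp_deriv)

lemma ld_HD: "ld i f x \<Longrightarrow> HD i f x (pd i f x)"
  unfolding HD_def pd_def ld_def by (simp add: DERIV_deriv_iff_real_differentiable)

lemma HD_ld: "HD i f x D \<Longrightarrow> ld i f x"
  unfolding HD_def ld_def using real_differentiable_def by blast

named_theorems HD_intros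

lemma HD_const[HD_intros]: "HD i (\<lambda>y. c) x 0"
  unfolding HD_def by simp

lemma HD_add[HD_intros]: "HD i f x A \<Longrightarrow> HD i g x B \<Longrightarrow> HD i (\<lambda>y. f y + g y) x (A + B)"
  unfolding HD_def by (rule DERIV_add)

lemma HD_diff[HD_intros]: "HD i f x A \<Longrightarrow> HD i g x B \<Longrightarrow> HD i (\<lambda>y. f y - g y) x (A - B)"
  unfolding HD_def by (rule DERIV_diff)

lemma HD_minus[HD_intros]: "HD i f x A \<Longrightarrow> HD i (\<lambda>y. - f y) x (- A)"
  unfolding HD_def by (rule DERIV_minus)

lemma HD_mult[HD_intros]: "HD i f x A \<Longrightarrow> HD i g x B \<Longrightarrow> HD i (\<lambda>y. f y * g y) x (A * g x + f x * B)"
  unfolding HD_def by (drule (1) DERIV_mult) (simp add: mult.commute)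

lemma HD_inverse[HD_intros]: "HD i f x A \<Longrightarrow> f x \<noteq> 0 \<Longrightarrow> HD i (\<lambda>y. 1 / f y) x (- A / (f x)^2)"
  unfolding HD_def using DERIV_inverse'[of "\<lambda>t. f (x + t *\<^sub>R axis i 1)" A 0 UNIV]
  by (simp add: divide_inverse power2_eq_square mult_ac)

lemma HD_sum[HD_intros]: "finite S \<Longrightarrow> (\<And>k. k \<in> S \<Longrightarrow> HD i (f k) x (A k)) \<Longrightarrow>
   HD i (\<lambda>y. \<Sum>k\<in>S. f k y) x (\<Sum>k\<in>S. A k)"
  unfolding HD_def by (rule DERIV_sum)

lemma HD_local:
  assumes "open U" "x \<in> U" "\<And>y. y \<in> U \<Longrightarrow> f y = h y" "HD i f x D"
  shows "HD i h x D"
proof -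
  let ?S = "{t::real. x + t *\<^sub>R axis i 1 \<in> U}"
  have "open ?S"
    using open_vimage[OF assms(1), of "\<lambda>t. x + t *\<^sub>R axis i 1"]
    by (simp add: vimage_def continuous_intros)
  moreover have "0 \<in> ?S" using assms(2) by simp
  ultimately show ?thesis using assms(3,4) unfolding HD_def
    by (auto intro: has_field_derivative_transform_within_open)
qed

lemma pd_local:
  assumes "open U" "x \<in> U" "\<And>y. y \<in> U \<Longrightarrow> f y = h y"
  shows "pd i f x = pd i h x"
proof -
  let ?S = "{t::real. x + t *\<^sub>R axis i 1 \<in> U}"
  have "open ?S"
    using open_vimage[OF assms(1), of "\<lambda>t. x + t *\<^sub>R axis i 1"]
    by (simp add: vimage_def continuous_intros)
  moreover have "0 \<in> ?S" using assms(2) by simp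
  ultimately have "eventually (\<lambda>t. t \<in> ?S) (nhds 0)"
    by (rule eventually_nhds_in_open)
  then have "eventually (\<lambda>t. f (x + t *\<^sub>R axis i 1) = h (x + t *\<^sub>R axis i 1)) (nhds 0)"
    by eventually_elim (use assms(3) in auto)
  then show ?thesis unfolding pd_def by (rule deriv_cong_ev) simp
qed

lemma ld_local:
  assumes "open U" "x \<in> U" "\<And>y. y \<in> U \<Longrightarrow> f y = h y" "ld i f x"
  shows "ld i h x"
  using HD_local[OF assms(1-3) ld_HD[OF assms(4)]] HD_ld by blast



coinductive SM :: "(real^'n::finite) set \<Rightarrow> (real^'n \<Rightarrow> real) \<Rightarrow> bool" for U where
  SMI: "continuous_on U f \<Longrightarrow> (\<And>i x. x \<in> U \<Longrightarrow> ld i f x) \<Longrightarrow> (\<And>i. SM U (pd i f)) \<Longrightarrow> SM U f"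

inductive RR :: "(real^'n::finite) set \<Rightarrow> (real^'n \<Rightarrow> real) \<Rightarrow> bool" for U where
  RR_SM: "SM U f \<Longrightarrow> RR U f"
| RR_const: "RR U (\<lambda>y. c)"
| RR_add: "RR U f \<Longrightarrow> RR U g \<Longrightarrow> RR U (\<lambda>y. f y + g y)"
| RR_mult: "RR U f \<Longrightarrow> RR U g \<Longrightarrow> RR U (\<lambda>y. f y * g y)"
| RR_inv: "RR U f \<Longrightarrow> (\<And>y. y \<in> U \<Longrightarrow> f y \<noteq> 0) \<Longrightarrow> RR U (\<lambda>y. 1 / f y)"
| RR_cong: "RR U f \<Longrightarrow> (\<And>y. y \<in> U \<Longrightarrow> f y = h y) \<Longrightarrow> RR U h"

lemma ld_add: "ld i f x \<Longrightarrow> ld i g x \<Longrightarrow> ld i (\<lambda>y. f y + g y) x"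
  by (rule HD_ld, rule HD_add; rule ld_HD)
lemma ld_mult: "ld i f x \<Longrightarrow> ld i g x \<Longrightarrow> ld i (\<lambda>y. f y * g y) x"
  by (rule HD_ld, rule HD_mult; rule ld_HD)
lemma ld_inv: "ld i f x \<Longrightarrow> f x \<noteq> 0 \<Longrightarrow> ld i (\<lambda>y. 1 / f y) x"
  by (rule HD_ld, rule HD_inverse, rule ld_HD)

lemma pd_const_fun: "pd i (\<lambda>y. c) = (\<lambda>y. 0)"
  by (rule ext, rule pd_eqI, rule HD_const)

lemma RR_props:
  assumes U: "open U" and "RR U f"
  shows "continuous_on U f \<and> (\<forall>i x. x \<in> U \<longrightarrow> ld i f x) \<and> (\<forall>i. RR U (pd i f))"
  using assms(2)
proof induction
  case (RR_SM f)
  then show ?case by (auto elim: SM.cases intro: RR.RR_SM) (metis SM.cases RR.RR_SM)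
next
  case (RR_const c)
  then show ?case by (auto simp: pd_const_fun intro: RR.RR_const HD_ld HD_const)
next
  case (RR_add f g)
  have c: "continuous_on U (\<lambda>y. f y + g y)" using RR_add by (auto intro: continuous_on_add)
  have l: "\<And>i x. x \<in> U \<Longrightarrow> ld i (\<lambda>y. f y + g y) x"
    using RR_add by (auto intro!: ld_add)
  have "RR U (pd i (\<lambda>y. f y + g y))" for i
  proof (rule RR_cong)
    show "RR U (\<lambda>y. pd i f y + pd i g y)" using RR_add by (auto intro: RR.RR_add)
    show "pd i f y + pd i g y = pd i (\<lambda>y. f y + g y) y" if "y \<in> U" for y
      using RR_add that by (auto intro!: pd_eqI[symmetric] HD_add ld_HD)
  qed
  then show ?case using c l by auto
next
  case (RR_mult f g)
  have c: "continuous_on U (\<lambda>y. f y * g y)" using RR_mult by (auto intro: continuous_on_mult)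
  have l: "\<And>i x. x \<in> U \<Longrightarrow> ld i (\<lambda>y. f y * g y) x"
    using RR_mult by (auto intro!: ld_mult)
  have "RR U (pd i (\<lambda>y. f y * g y))" for i
  proof (rule RR_cong)
    show "RR U (\<lambda>y. pd i f y * g y + f y * pd i g y)" using RR_mult by (intro RR.RR_add RR.RR_mult) auto
    show "pd i f y * g y + f y * pd i g y = pd i (\<lambda>y. f y * g y) y" if "y \<in> U" for y
      using RR_mult that by (auto intro!: pd_eqI[symmetric] HD_mult ld_HD)
  qed
  then show ?case using c l by auto
next
  case (RR_inv f)
  have c: "continuous_on U (\<lambda>y. 1 / f y)" using RR_inv by (auto intro: continuous_on_divide)
  have l: "\<And>i x. x \<in> U \<Longrightarrow> ld i (\<lambda>y. 1 / f y) x"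
    using RR_inv by (auto intro!: ld_inv)
  have "RR U (pd i (\<lambda>y. 1 / f y))" for i
  proof (rule RR_cong)
    show "RR U (\<lambda>y. ((-1) * pd i f y * (1 / f y)) * (1 / f y))"
      using RR_inv by (intro RR.RR_mult RR.RR_inv RR.RR_const) auto
    show "((-1) * pd i f y * (1 / f y)) * (1 / f y) = pd i (\<lambda>y. 1 / f y) y" if "y \<in> U" for y
    proof -
      have "HD i (\<lambda>y. 1 / f y) y (- pd i f y / (f y)^2)"
        using RR_inv that by (intro HD_inverse ld_HD) auto
      then have "pd i (\<lambda>y. 1 / f y) y = - pd i f y / (f y)^2" by (rule pd_eqI)
      then show ?thesis by (simp add: power2_eq_square)
    qed
  qed
  then show ?case using c l by auto
next
  case (RR_cong f h)
  have c: "continuous_on U h" using RR_cong continuous_on_cong by metis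
  have l: "\<And>i x. x \<in> U \<Longrightarrow> ld i h x" using RR_cong U by (auto intro: ld_local)
  have "RR U (pd i h)" for i
  proof (rule RR.RR_cong)
    show "RR U (pd i f)" using RR_cong by auto
    show "pd i f y = pd i h y" if "y \<in> U" for y using RR_cong U that by (intro pd_local) auto
  qed
  then show ?case using c l by auto
qed

lemma RR_SM:
  assumes "open U" "RR U f" shows "SM U f"
  using assms(2)
proof (coinduction arbitrary: f rule: SM.coinduct)
  case (SM f)
  then show ?case using RR_props[OF assms(1) SM] by auto
qed

context fixes U :: "(real^'n::finite) set" assumes U: "open U"
begin

lemma SM_const[intro]: "SM U (\<lambda>y. c)"
  by (rule RR_SM[OF U], rule RR_const)

lemma SM_add[intro]: "SM U f \<Longrightarrow> SM U g \<Longrightarrow> SM U (\<lambda>y. f y + g y)"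
  by (rule RR_SM[OF U], rule RR_add; rule RR.RR_SM)

lemma SM_mult[intro]: "SM U f \<Longrightarrow> SM U g \<Longrightarrow> SM U (\<lambda>y. f y * g y)"
  by (rule RR_SM[OF U], rule RR_mult; rule RR.RR_SM)

lemma SM_inv: "SM U f \<Longrightarrow> (\<And>y. y \<in> U \<Longrightarrow> f y \<noteq> 0) \<Longrightarrow> SM U (\<lambda>y. 1 / f y)"
  by (rule RR_SM[OF U], rule RR_inv, rule RR.RR_SM)

lemma SM_cong: "SM U f \<Longrightarrow> (\<And>y. y \<in> U \<Longrightarrow> f y = h y) \<Longrightarrow> SM U h"
  by (rule RR_SM[OF U], rule RR_cong, rule RR.RR_SM)

lemma SM_cmult[intro]: "SM U f \<Longrightarrow> SM U (\<lambda>y. c * f y)"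
  using SM_mult[OF SM_const] by blast

lemma SM_minus[intro]: "SM U f \<Longrightarrow> SM U (\<lambda>y. - f y)"
  using SM_cmult[of f "-1"] by simp

lemma SM_diff[intro]: "SM U f \<Longrightarrow> SM U g \<Longrightarrow> SM U (\<lambda>y. f y - g y)"
  using SM_add[of f "\<lambda>y. - g y"] SM_minus by simp

lemma SM_divide: "SM U f \<Longrightarrow> SM U g \<Longrightarrow> (\<And>y. y \<in> U \<Longrightarrow> g y \<noteq> 0) \<Longrightarrow> SM U (\<lambda>y. f y / g y)"
  using SM_mult[OF _ SM_inv, of f g] by (simp add: divide_inverse)

lemma SM_cdiv[intro]: "SM U f \<Longrightarrow> SM U (\<lambda>y. f y / c)"
  using SM_cmult[of f "1/c"] by simp

lemma SM_power2[intro]: "SM U f \<Longrightarrow> SM U (\<lambda>y. (f y)^2)"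
  using SM_mult[of f f] by (simp add: power2_eq_square)

lemma SM_sum[intro]:
  assumes "finite S" "\<And>k. k \<in> S \<Longrightarrow> SM U (f k)"
  shows "SM U (\<lambda>y. \<Sum>k\<in>S. f k y)"
  using assms by (induction S rule: finite_induct) auto

lemma SM_pd[intro]: "SM U f \<Longrightarrow> SM U (pd i f)"
  by (auto elim: SM.cases)

lemma SM_cont: "SM U f \<Longrightarrow> continuous_on U f"
  by (auto elim: SM.cases)

lemma SM_ld: "SM U f \<Longrightarrow> x \<in> U \<Longrightarrow> ld i f x"
  by (auto elim: SM.cases)

lemma SM_HD: "SM U f \<Longrightarrow> x \<in> U \<Longrightarrow> HD i f x (pd i f x)"
  by (rule ld_HD, rule SM_ld)

end

lemma ipd_append: "ipd (is @ [i]) f = ipd is (pd i f)"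
  by (induction "is") auto

lemma smooth_on_SM:
  assumes "smooth_on U f" shows "SM U f"
proof -
  have "SM U (ipd is f)" for "is"
  proof (coinduction arbitrary: "is" rule: SM.coinduct)
    case (SM "is")
    have "continuous_on U (ipd is f)" using assms unfolding smooth_on_def by blast
    moreover have "\<And>i x. x \<in> U \<Longrightarrow> ld i (ipd is f) x" using assms unfolding smooth_on_def ld_def by blast
    moreover have "\<And>i. pd i (ipd is f) = ipd (i # is) f" by simp
    ultimately show ?case by blast
  qed
  from this[of "[]"] show ?thesis by simp
qed



lemma SM_prod:
  assumes U: "open U" and "finite S" "\<And>k. k \<in> S \<Longrightarrow> SM U (f k)"
  shows "SM U (\<lambda>y. \<Prod>k\<in>S. f k y)"
  using assms(2,3) by (induction S rule: finite_induct) (auto intro: SM_mult[OF U] SM_const[OF U])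

lemma SM_det:
  assumes U: "open U" and "\<And>r s. SM U (\<lambda>y. M y $ r $ s)"
  shows "SM U (\<lambda>y. det (M y :: real^'n::finite^'n))"
  unfolding det_def
  by (intro SM_sum[OF U] SM_mult[OF U] SM_const[OF U] SM_prod[OF U] assms(2)) auto

definition Gm :: "(real^'n::finite \<Rightarrow> 'n \<Rightarrow> 'n \<Rightarrow> real) \<Rightarrow> real^'n \<Rightarrow> real^'n^'n" where
  "Gm g x = (\<chi> a b. g x a b)"

lemma invertible_inv:
  fixes A :: "real^'n::finite^'n"
  assumes "invertible A"
  shows "A ** matrix_inv A = mat 1" "matrix_inv A ** A = mat 1"
proof -
  from assms obtain B where "A ** B = mat 1 \<and> B ** A = mat 1" unfolding invertible_def by blast
  then have "A ** matrix_inv A = mat 1 \<and> matrix_inv A ** A = mat 1"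
    unfolding matrix_inv_def by (rule someI)
  then show "A ** matrix_inv A = mat 1" "matrix_inv A ** A = mat 1" by auto
qed

lemma inv_sym:
  fixes A :: "real^'n::finite^'n"
  assumes "invertible A" "transpose A = A"
  shows "transpose (matrix_inv A) = matrix_inv A"
proof -
  let ?B = "matrix_inv A"
  have l: "transpose ?B ** A = mat 1"
    using invertible_inv(1)[OF assms(1)] matrix_transpose_mul[of A ?B] assms(2)
    by (metis transpose_mat)
  have "transpose ?B = transpose ?B ** (A ** ?B)" using invertible_inv(1)[OF assms(1)] by simp
  also have "\<dots> = (transpose ?B ** A) ** ?B" by (simp add: matrix_mul_assoc)
  also have "\<dots> = ?B" using l by simp
  finally show ?thesis .
qed

lemma cramer_inv:
  fixes A :: "real^'n::finite^'n"
  assumes "det A \<noteq> 0"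
  shows "matrix_inv A $ j $ k = det (\<chi> r s. if s = j then (if r = k then 1 else 0) else A $ r $ s) / det A"
proof -
  have inv: "invertible A" using assms invertible_det_nz by blast
  let ?x = "column k (matrix_inv A)"
  have "A *v ?x = column k (A ** matrix_inv A)"
    by (simp add: column_def matrix_vector_mult_def matrix_matrix_mult_def vec_eq_iff)
  also have "\<dots> = axis k 1" using invertible_inv(1)[OF inv]
    by (simp add: column_def mat_def axis_def vec_eq_iff)
  finally have "?x = (\<chi> k'. det(\<chi> i j. if j = k' then (axis k 1)$i else A$i$j) / det A)"
    using cramer[OF assms] by blast
  then have "?x $ j = det(\<chi> i j'. if j' = j then (axis k 1)$i else A$i$j') / det A" by simp
  moreover have "(\<chi> i j'. if j' = j then (axis k 1)$i else A$i$j') = (\<chi> r s. if s = j then (if r = k then 1 else 0) else A$r$s)"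
    by (simp add: axis_def vec_eq_iff)
  ultimately show ?thesis by (simp add: column_def)
qed

locale RM =
  fixes U :: "(real^'n::finite) set" and g :: "real^'n \<Rightarrow> 'n \<Rightarrow> 'n \<Rightarrow> real"
  assumes U: "open U" and metric: "riemannian_metric_on U g"
begin

lemma g_SM: "SM U (\<lambda>y. g y i j)"
  using metric smooth_on_SM unfolding riemannian_metric_on_def by blast

lemma g_sym: "y \<in> U \<Longrightarrow> g y i j = g y j i"
  using metric unfolding riemannian_metric_on_def by blast

lemma posdef: "y \<in> U \<Longrightarrow> v \<noteq> 0 \<Longrightarrow> (\<Sum>i\<in>UNIV. \<Sum>j\<in>UNIV. g y i j * v$i * v$j) > 0"
  using metric unfolding riemannian_metric_on_def by blast

lemma det_nz: assumes y: "y \<in> U" shows "det (Gm g y) \<noteq> 0"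
proof
  assume "det (Gm g y) = 0"
  then have "\<not> inj ((*v) (Gm g y))"
    using det_nz_iff_inj[of "(*v) (Gm g y)"] by (simp add: matrix_vector_mul_linear)
  then obtain a b where ab: "a \<noteq> b" "Gm g y *v a = Gm g y *v b" by (auto simp: inj_on_def)
  define d where "d = a - b"
  have d0: "d \<noteq> 0" using ab d_def by auto
  have "Gm g y *v d = 0" using ab unfolding d_def by (simp add: matrix_vector_mult_diff_distrib)
  then have e: "(\<Sum>j\<in>UNIV. g y i j * d$j) = 0" for i
    by (simp add: matrix_vector_mult_def Gm_def vec_eq_iff)
  have "(\<Sum>i\<in>UNIV. \<Sum>j\<in>UNIV. g y i j * d$i * d$j) = (\<Sum>i\<in>UNIV. d$i * (\<Sum>j\<in>UNIV. g y i j * d$j))"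
    by (simp add: sum_distrib_left mult_ac)
  also have "\<dots> = 0" using e by simp
  finally show False using posdef[OF y d0] by simp
qed

lemma invertible_G: "y \<in> U \<Longrightarrow> invertible (Gm g y)"
  using det_nz invertible_det_nz by blast

lemma ginv_eq: "ginv g y i j = matrix_inv (Gm g y) $ i $ j"
  by (simp add: ginv_def Gm_def)

lemma inv_r: assumes "y \<in> U" shows "(\<Sum>b\<in>UNIV. g y a b * ginv g y b c) = (if a = c then 1 else 0)"
proof -
  have "(Gm g y ** matrix_inv (Gm g y)) $ a $ c = mat 1 $ a $ c"
    using invertible_inv(1)[OF invertible_G[OF assms]] by simp
  then show ?thesis by (simp add: matrix_matrix_mult_def ginv_eq mat_def Gm_def)
qed

lemma inv_l: assumes "y \<in> U" shows "(\<Sum>b\<in>UNIV. ginv g y a b * g y b c) = (if a = c then 1 else 0)"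
proof -
  have "(matrix_inv (Gm g y) ** Gm g y) $ a $ c = mat 1 $ a $ c"
    using invertible_inv(2)[OF invertible_G[OF assms]] by simp
  then show ?thesis by (simp add: matrix_matrix_mult_def ginv_eq mat_def Gm_def)
qed

lemma ginv_sym: assumes "y \<in> U" shows "ginv g y a b = ginv g y b a"
proof -
  have "transpose (Gm g y) = Gm g y"
    using g_sym[OF assms] by (simp add: transpose_def Gm_def vec_eq_iff)
  then have "transpose (matrix_inv (Gm g y)) = matrix_inv (Gm g y)"
    using inv_sym invertible_G[OF assms] by blast
  then have "transpose (matrix_inv (Gm g y)) $ a $ b = matrix_inv (Gm g y) $ a $ b" by simp
  then show ?thesis by (simp add: ginv_eq transpose_def)
qed

lemma ginv_SM: "SM U (\<lambda>y. ginv g y j k)"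
proof (rule SM_cong[OF U])
  show "SM U (\<lambda>y. det (\<chi> r s. if s = j then (if r = k then 1 else 0) else Gm g y $ r $ s) / det (Gm g y))"
  proof (rule SM_divide[OF U])
    show "SM U (\<lambda>y. det (\<chi> r s. if s = j then (if r = k then 1 else 0) else Gm g y $ r $ s))"
    proof (rule SM_det[OF U])
      fix r s
      show "SM U (\<lambda>y. (\<chi> r s. if s = j then (if r = k then 1 else 0) else Gm g y $ r $ s) $ r $ s)"
        by (cases "s = j") (auto simp: Gm_def intro: g_SM SM_const[OF U])
    qed
    show "SM U (\<lambda>y. det (Gm g y))"
      by (rule SM_det[OF U]) (auto simp: Gm_def intro: g_SM)
  qed (rule det_nz)
  show "det (\<chi> r s. if s = j then (if r = k then 1 else 0) else Gm g y $ r $ s) / det (Gm g y) = ginv g y j k"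
    if "y \<in> U" for y
    using cramer_inv[OF det_nz[OF that]] by (simp add: ginv_eq)
qed

end



context RM begin

lemma dg_sym: "x \<in> U \<Longrightarrow> pd i (\<lambda>y. g y j l) x = pd i (\<lambda>y. g y l j) x"
  by (rule pd_local[OF U]) (auto intro: g_sym)

lemma inv_contract: assumes "y \<in> U"
  shows "(\<Sum>e\<in>UNIV. ginv g y b e * (\<Sum>d\<in>UNIV. g y e d * X d)) = X b"
proof -
  have "(\<Sum>e\<in>UNIV. ginv g y b e * (\<Sum>d\<in>UNIV. g y e d * X d))
      = (\<Sum>d\<in>UNIV. (\<Sum>e\<in>UNIV. ginv g y b e * g y e d) * X d)"
    by (simp add: sum_distrib_left sum_distrib_right mult_ac) (rule sum.swap)
  also have "\<dots> = (\<Sum>d\<in>UNIV. if b = d then X d else 0)"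
    by (rule sum.cong) (simp_all add: inv_l[OF assms])
  also have "\<dots> = X b" by simp
  finally show ?thesis .
qed

lemma inv_contract2: assumes "y \<in> U"
  shows "(\<Sum>e\<in>UNIV. g y b e * (\<Sum>d\<in>UNIV. ginv g y e d * X d)) = X b"
proof -
  have "(\<Sum>e\<in>UNIV. g y b e * (\<Sum>d\<in>UNIV. ginv g y e d * X d))
      = (\<Sum>d\<in>UNIV. (\<Sum>e\<in>UNIV. g y b e * ginv g y e d) * X d)"
    by (simp add: sum_distrib_left sum_distrib_right mult_ac) (rule sum.swap)
  also have "\<dots> = (\<Sum>d\<in>UNIV. if b = d then X d else 0)"
    by (rule sum.cong) (simp_all add: inv_r[OF assms])
  also have "\<dots> = X b" by simp
  finally show ?thesis .
qed

lemma dginv: assumes x: "x \<in> U"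
  shows "pd a (\<lambda>y. ginv g y b c) x =
     - (\<Sum>e\<in>UNIV. ginv g x b e * (\<Sum>d\<in>UNIV. pd a (\<lambda>y. g y e d) x * ginv g x d c))"
proof -
  have H: "(\<Sum>d\<in>UNIV. g x e d * pd a (\<lambda>y. ginv g y d c) x) = - (\<Sum>d\<in>UNIV. pd a (\<lambda>y. g y e d) x * ginv g x d c)" for e
  proof -
    have "pd a (\<lambda>y. \<Sum>d\<in>UNIV. g y e d * ginv g y d c) x = pd a (\<lambda>y. if e = c then 1 else 0) x"
      by (rule pd_local[OF U x]) (simp add: inv_r)
    also have "\<dots> = 0" by (simp add: pd_const_fun)
    finally have 0: "pd a (\<lambda>y. \<Sum>d\<in>UNIV. g y e d * ginv g y d c) x = 0" .
    have hd: "HD a (\<lambda>y. \<Sum>d\<in>UNIV. g y e d * ginv g y d c) x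
       (\<Sum>d\<in>UNIV. pd a (\<lambda>y. g y e d) x * ginv g x d c + g x e d * pd a (\<lambda>y. ginv g y d c) x)"
      by (rule HD_sum, simp, rule HD_mult; rule SM_HD[OF U _ x], rule g_SM ginv_SM)
    have "(\<Sum>d\<in>UNIV. pd a (\<lambda>y. g y e d) x * ginv g x d c + g x e d * pd a (\<lambda>y. ginv g y d c) x) = 0"
      using pd_eqI[OF hd] 0 by simp
    then show ?thesis by (simp add: sum.distrib eq_neg_iff_add_eq_0 add.commute)
  qed
  have "pd a (\<lambda>y. ginv g y b c) x = (\<Sum>e\<in>UNIV. ginv g x b e * (\<Sum>d\<in>UNIV. g x e d * pd a (\<lambda>y. ginv g y d c) x))"
    by (rule inv_contract[OF x, symmetric])
  also have "\<dots> = - (\<Sum>e\<in>UNIV. ginv g x b e * (\<Sum>d\<in>UNIV. pd a (\<lambda>y. g y e d) x * ginv g x d c))"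
    by (simp add: H sum_negf)
  finally show ?thesis .
qed

lemma compat: assumes x: "x \<in> U"
  shows "pd a (\<lambda>y. ginv g y b k) x =
     - (\<Sum>c\<in>UNIV. ginv g x b c * chr g k a c x) - (\<Sum>c\<in>UNIV. chr g b a c x * ginv g x c k)"
proof -
  define Gi where "Gi i j = ginv g x i j" for i j
  define E where "E i j l = pd i (\<lambda>y. g y j l) x" for i j l
  have Gs: "Gi i j = Gi j i" for i j unfolding Gi_def using ginv_sym[OF x] .
  have Es: "E i j l = E i l j" for i j l unfolding E_def using dg_sym[OF x] .
  have chr: "2 * chr g k' i j x = (\<Sum>l\<in>UNIV. Gi k' l * (E i j l + E j i l - E l i j))" for k' i j
    unfolding chr_def Gi_def E_def by simp
  have "2 * (\<Sum>c\<in>UNIV. Gi b c * chr g k a c x) = (\<Sum>c\<in>UNIV. Gi b c * (2 * chr g k a c x))"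
    by (simp add: sum_distrib_left mult_ac)
  also have "\<dots> = (\<Sum>c\<in>UNIV. \<Sum>l\<in>UNIV. Gi b c * (Gi k l * (E a c l + E c a l - E l a c)))"
    unfolding chr by (simp add: sum_distrib_left)
  finally have S1: "2 * (\<Sum>c\<in>UNIV. Gi b c * chr g k a c x) = (\<Sum>c\<in>UNIV. \<Sum>l\<in>UNIV. Gi b c * (Gi k l * (E a c l + E c a l - E l a c)))" .
  have "2 * (\<Sum>c\<in>UNIV. chr g b a c x * Gi c k) = (\<Sum>c\<in>UNIV. (2 * chr g b a c x) * Gi c k)"
    by (simp add: sum_distrib_left mult_ac)
  also have "\<dots> = (\<Sum>c\<in>UNIV. \<Sum>l\<in>UNIV. Gi b l * (E a c l + E c a l - E l a c) * Gi c k)"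
    unfolding chr by (simp add: sum_distrib_right)
  also have "\<dots> = (\<Sum>l\<in>UNIV. \<Sum>c\<in>UNIV. Gi b l * (E a c l + E c a l - E l a c) * Gi c k)"
    by (rule sum.swap)
  finally have S2: "2 * (\<Sum>c\<in>UNIV. chr g b a c x * Gi c k) = (\<Sum>c\<in>UNIV. \<Sum>l\<in>UNIV. Gi b c * (E a l c + E l a c - E c a l) * Gi l k)" .
  have "2 * ((\<Sum>c\<in>UNIV. Gi b c * chr g k a c x) + (\<Sum>c\<in>UNIV. chr g b a c x * Gi c k))
      = (\<Sum>c\<in>UNIV. \<Sum>l\<in>UNIV. Gi b c * (Gi k l * (E a c l + E c a l - E l a c)) + Gi b c * (E a l c + E l a c - E c a l) * Gi l k)"
    unfolding distrib_left S1 S2 by (simp add: sum.distrib)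
  also have "\<dots> = (\<Sum>c\<in>UNIV. \<Sum>l\<in>UNIV. 2 * (Gi b c * (E a c l * Gi l k)))"
    by (intro sum.cong refl) (subst Gs, subst (2) Es, simp add: algebra_simps)
  also have "\<dots> = 2 * (- pd a (\<lambda>y. ginv g y b k) x)"
    unfolding dginv[OF x] Gi_def E_def by (simp add: sum_distrib_left)
  finally have "(\<Sum>c\<in>UNIV. Gi b c * chr g k a c x) + (\<Sum>c\<in>UNIV. chr g b a c x * Gi c k) = - pd a (\<lambda>y. ginv g y b k) x"
    by simp
  then show ?thesis unfolding Gi_def by simp
qed

lemma grad_fun: "grad g w b = (\<lambda>y. \<Sum>c\<in>UNIV. ginv g y b c * pd c w y)"
  by (rule ext) (simp add: grad_def)

lemma grad_SM: "SM U w \<Longrightarrow> SM U (grad g w b)"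
  unfolding grad_fun by (intro SM_sum[OF U] SM_mult[OF U] ginv_SM SM_pd[OF U]) auto

lemma gradM: assumes x: "x \<in> U" and w: "SM U w"
  shows "pd a (grad g w b) x + (\<Sum>c\<in>UNIV. chr g b a c x * grad g w c x)
       = (\<Sum>c\<in>UNIV. ginv g x b c * hess g w a c x)"
proof -
  have hd: "HD a (grad g w b) x (\<Sum>c\<in>UNIV. pd a (\<lambda>y. ginv g y b c) x * pd c w x + ginv g x b c * pd a (pd c w) x)"
    unfolding grad_fun
    by (rule HD_sum, simp, rule HD_mult; rule SM_HD[OF U _ x], rule ginv_SM SM_pd[OF U w])
  have "(\<Sum>c\<in>UNIV. pd a (\<lambda>y. ginv g y b c) x * pd c w x)
     = - (\<Sum>c\<in>UNIV. \<Sum>d\<in>UNIV. ginv g x b d * chr g c a d x * pd c w x)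
       - (\<Sum>c\<in>UNIV. \<Sum>d\<in>UNIV. chr g b a d x * ginv g x d c * pd c w x)"
    unfolding compat[OF x] by (simp add: algebra_simps sum_distrib_right sum_distrib_left sum_subtractf sum_negf)
  also have "\<dots> = - (\<Sum>d\<in>UNIV. \<Sum>c\<in>UNIV. ginv g x b d * chr g c a d x * pd c w x)
       - (\<Sum>d\<in>UNIV. \<Sum>c\<in>UNIV. chr g b a d x * ginv g x d c * pd c w x)"
    by (simp add: sum.swap[of "\<lambda>c d. ginv g x b d * chr g c a d x * pd c w x"]
                  sum.swap[of "\<lambda>c d. chr g b a d x * ginv g x d c * pd c w x"])
  finally have A: "(\<Sum>c\<in>UNIV. pd a (\<lambda>y. ginv g y b c) x * pd c w x)
     = - (\<Sum>c\<in>UNIV. \<Sum>k\<in>UNIV. ginv g x b c * chr g k a c x * pd k w x)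
       - (\<Sum>c\<in>UNIV. \<Sum>k\<in>UNIV. chr g b a c x * ginv g x c k * pd k w x)" .
  show ?thesis
    unfolding pd_eqI[OF hd] sum.distrib A
    by (simp add: hess_def grad_def sum_distrib_left sum_subtractf algebra_simps)
qed

lemma gradM': assumes x: "x \<in> U" and w: "SM U w"
  shows "pd a (grad g w b) x = (\<Sum>c\<in>UNIV. ginv g x b c * hess g w a c x) - (\<Sum>c\<in>UNIV. chr g b a c x * grad g w c x)"
  using gradM[OF x w, of a b] by (simp add: algebra_simps)

lemma ginner_grad: assumes "y \<in> U" shows "ginner g u w y = (\<Sum>j\<in>UNIV. grad g u j y * pd j w y)"
proof -
  have "ginner g u w y = (\<Sum>i\<in>UNIV. \<Sum>j\<in>UNIV. ginv g y j i * pd i u y * pd j w y)"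
    unfolding ginner_def using ginv_sym[OF assms] by simp
  also have "\<dots> = (\<Sum>j\<in>UNIV. \<Sum>i\<in>UNIV. ginv g y j i * pd i u y * pd j w y)" by (rule sum.swap)
  also have "\<dots> = (\<Sum>j\<in>UNIV. grad g u j y * pd j w y)"
    unfolding grad_def by (simp add: sum_distrib_right)
  finally show ?thesis .
qed

lemma dginner: assumes x: "x \<in> U" and u: "SM U u" and w: "SM U w"
  shows "pd a (ginner g u w) x = (\<Sum>i\<in>UNIV. hess g u a i x * grad g w i x) + (\<Sum>i\<in>UNIV. hess g w a i x * grad g u i x)"
proof -
  have "pd a (ginner g u w) x = pd a (\<lambda>y. \<Sum>j\<in>UNIV. grad g u j y * pd j w y) x"
    by (rule pd_local[OF U x]) (rule ginner_grad)
  also have "\<dots> = (\<Sum>j\<in>UNIV. pd a (grad g u j) x * pd j w x + grad g u j x * pd a (pd j w) x)"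
    by (rule pd_eqI, rule HD_sum, simp, rule HD_mult; rule SM_HD[OF U _ x], rule grad_SM[OF u] SM_pd[OF U w])
  also have "\<dots> = (\<Sum>j\<in>UNIV. ((\<Sum>c\<in>UNIV. ginv g x j c * hess g u a c x) - (\<Sum>c\<in>UNIV. chr g j a c x * grad g u c x)) * pd j w x
          + grad g u j x * pd a (pd j w) x)"
    by (simp add: gradM'[OF x u])
  also have "\<dots> = (\<Sum>j\<in>UNIV. \<Sum>c\<in>UNIV. ginv g x j c * hess g u a c x * pd j w x)
      - (\<Sum>j\<in>UNIV. \<Sum>c\<in>UNIV. chr g j a c x * grad g u c x * pd j w x)
      + (\<Sum>j\<in>UNIV. grad g u j x * pd a (pd j w) x)"
    by (simp only: left_diff_distrib sum_distrib_right sum.distrib sum_subtractf)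
  also have "(\<Sum>j\<in>UNIV. \<Sum>c\<in>UNIV. ginv g x j c * hess g u a c x * pd j w x)
      = (\<Sum>c\<in>UNIV. \<Sum>j\<in>UNIV. ginv g x j c * hess g u a c x * pd j w x)" by (rule sum.swap)
  also have "\<dots> = (\<Sum>i\<in>UNIV. hess g u a i x * grad g w i x)"
    unfolding grad_def using ginv_sym[OF x] by (simp add: sum_distrib_left mult_ac)
  also have "(\<Sum>j\<in>UNIV. \<Sum>c\<in>UNIV. chr g j a c x * grad g u c x * pd j w x)
      = (\<Sum>c\<in>UNIV. \<Sum>j\<in>UNIV. chr g j a c x * grad g u c x * pd j w x)" by (rule sum.swap)
  also have "(\<Sum>i\<in>UNIV. hess g u a i x * grad g w i x) - (\<Sum>c\<in>UNIV. \<Sum>j\<in>UNIV. chr g j a c x * grad g u c x * pd j w x)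
      + (\<Sum>j\<in>UNIV. grad g u j x * pd a (pd j w) x)
      = (\<Sum>i\<in>UNIV. hess g u a i x * grad g w i x) + (\<Sum>i\<in>UNIV. hess g w a i x * grad g u i x)"
    by (simp add: hess_def sum_distrib_left sum_distrib_right sum_subtractf algebra_simps)
  finally show ?thesis .
qed

end



locale RMd = RM U g for U :: "(real^'n::finite) set" and g +
  assumes dim: "CARD('n) \<ge> 3"
begin


lemma nn_props: "dimn TYPE('n) \<ge> 3" "dimn TYPE('n) \<noteq> 0" "dimn TYPE('n) - 1 \<noteq> 0" "dimn TYPE('n) - 2 \<noteq> 0"
  using dim by (auto simp: dimn_def)

definition rho :: "(real^'n \<Rightarrow> real) \<Rightarrow> real^'n \<Rightarrow> real" where
  "rho w = (\<lambda>x. - (lap g w x + Jfun g x * w x) / dimn TYPE('n))"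

lemma ID_eq: "fscale (1/dimn TYPE('n)) (tractorD g 1 w) = (w, grad g w, rho w)"
  using nn_props by (auto simp: fscale_def tractorD_def rho_def fun_eq_iff)

lemma tval_eq: "tval (w, grad g w, rho w) x = (w x, \<lambda>b. grad g w b x, rho w x)"
  by (simp add: tval_def)

lemma tmet_X: "tmet g x Xtr (tval (w, grad g w, rho w) x) = w x"
  by (simp add: tmet_def Xtr_def tval_def)

lemma tmet_grad: assumes "x \<in> U"
  shows "(\<Sum>a\<in>UNIV. \<Sum>b\<in>UNIV. g x a b * f a * grad g w b x) = (\<Sum>a\<in>UNIV. f a * pd a w x)"
proof -
  have "(\<Sum>a\<in>UNIV. \<Sum>b\<in>UNIV. g x a b * f a * grad g w b x) = (\<Sum>a\<in>UNIV. f a * (\<Sum>b\<in>UNIV. g x a b * (\<Sum>c\<in>UNIV. ginv g x b c * pd c w x)))"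
    by (simp add: grad_def sum_distrib_left mult_ac)
  also have "\<dots> = (\<Sum>a\<in>UNIV. f a * pd a w x)" using inv_contract2[OF assms] by simp
  finally show ?thesis .
qed

lemma tconn_eq: assumes x: "x \<in> U" and w: "SM U w"
  shows "tconn g (w, grad g w, rho w) a x =
    (0, \<lambda>b. (\<Sum>c\<in>UNIV. ginv g x b c * (hess g w a c x + w x * schouten g a c x)) + rho w x * (if a = b then 1 else 0),
     pd a (rho w) x - (\<Sum>b\<in>UNIV. schouten g a b x * grad g w b x))"
proof -
  have top: "pd a w x - (\<Sum>b\<in>UNIV. g x a b * grad g w b x) = 0"
    using inv_contract2[OF x, of a "\<lambda>c. pd c w x"] by (simp add: grad_def)
  have mid: "pd a (grad g w b) x + (\<Sum>c\<in>UNIV. chr g b a c x * grad g w c x)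
      + w x * (\<Sum>c\<in>UNIV. ginv g x b c * schouten g a c x) + rho w x * (if a = b then 1 else 0)
    = (\<Sum>c\<in>UNIV. ginv g x b c * (hess g w a c x + w x * schouten g a c x)) + rho w x * (if a = b then 1 else 0)" for b
    unfolding gradM[OF x w] by (simp add: algebra_simps sum.distrib sum_distrib_left)
  show ?thesis unfolding tconn_def using top mid by (simp add: fun_eq_iff)
qed

lemmas SMI = SM_add[OF U] SM_diff[OF U] SM_mult[OF U] SM_minus[OF U] SM_sum[OF U] SM_pd[OF U]
  SM_const[OF U] g_SM ginv_SM SM_cdiv[OF U] SM_power2[OF U]

lemma chr_SM: "SM U (chr g k i j)"
proof -
  have "SM U (\<lambda>x. 1/2 * (\<Sum>l\<in>UNIV. ginv g x k l * (pd i (\<lambda>y. g y j l) x + pd j (\<lambda>y. g y i l) x - pd l (\<lambda>y. g y i j) x)))" by (intro SMI; simp)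
  moreover have "chr g k i j = (\<lambda>x. 1/2 * (\<Sum>l\<in>UNIV. ginv g x k l * (pd i (\<lambda>y. g y j l) x + pd j (\<lambda>y. g y i l) x - pd l (\<lambda>y. g y i j) x)))"
    by (rule ext) (simp add: chr_def)
  ultimately show ?thesis by simp
qed

lemma ricci_SM: "SM U (ricci g i j)"
proof -
  have "SM U (\<lambda>x. \<Sum>k\<in>UNIV. pd k (chr g k i j) x - pd j (chr g k i k) x
      + (\<Sum>l\<in>UNIV. chr g k k l x * chr g l i j x - chr g k j l x * chr g l i k x))" by (intro SMI chr_SM; simp)
  moreover have "ricci g i j = (\<lambda>x. \<Sum>k\<in>UNIV. pd k (chr g k i j) x - pd j (chr g k i k) x
      + (\<Sum>l\<in>UNIV. chr g k k l x * chr g l i j x - chr g k j l x * chr g l i k x))"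
    by (rule ext) (simp add: ricci_def)
  ultimately show ?thesis by simp
qed

lemma scal_SM: "SM U (scal g)"
proof -
  have "SM U (\<lambda>x. \<Sum>i\<in>UNIV. \<Sum>j\<in>UNIV. ginv g x i j * ricci g i j x)" by (intro SMI ricci_SM; simp)
  moreover have "scal g = (\<lambda>x. \<Sum>i\<in>UNIV. \<Sum>j\<in>UNIV. ginv g x i j * ricci g i j x)"
    by (rule ext) (simp add: scal_def)
  ultimately show ?thesis by simp
qed

lemma Jfun_SM: "SM U (Jfun g)"
proof -
  have "SM U (\<lambda>x. scal g x / (2 * (dimn TYPE('n) - 1)))" by (intro SMI scal_SM; simp)
  moreover have "Jfun g = (\<lambda>x. scal g x / (2 * (dimn TYPE('n) - 1)))"
    by (rule ext) (simp add: Jfun_def)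
  ultimately show ?thesis by simp
qed

lemma schouten_SM: "SM U (schouten g i j)"
proof -
  have "SM U (\<lambda>x. (ricci g i j x - Jfun g x * g x i j) / (dimn TYPE('n) - 2))" by (intro SMI ricci_SM Jfun_SM; simp)
  moreover have "schouten g i j = (\<lambda>x. (ricci g i j x - Jfun g x * g x i j) / (dimn TYPE('n) - 2))"
    by (rule ext) (simp add: schouten_def)
  ultimately show ?thesis by simp
qed

lemma hess_SM: "SM U w \<Longrightarrow> SM U (hess g w i j)"
proof -
  assume w: "SM U w"
  have "SM U (\<lambda>x. pd i (pd j w) x - (\<Sum>k\<in>UNIV. chr g k i j x * pd k w x))" by (intro SMI chr_SM w; simp)
  moreover have "hess g w i j = (\<lambda>x. pd i (pd j w) x - (\<Sum>k\<in>UNIV. chr g k i j x * pd k w x))"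
    by (rule ext) (simp add: hess_def)
  ultimately show ?thesis by simp
qed

lemma lap_SM: "SM U w \<Longrightarrow> SM U (lap g w)"
proof -
  assume w: "SM U w"
  have "SM U (\<lambda>x. \<Sum>i\<in>UNIV. \<Sum>j\<in>UNIV. ginv g x i j * hess g w i j x)" by (intro SMI hess_SM w; simp)
  moreover have "lap g w = (\<lambda>x. \<Sum>i\<in>UNIV. \<Sum>j\<in>UNIV. ginv g x i j * hess g w i j x)"
    by (rule ext) (simp add: lap_def)
  ultimately show ?thesis by simp
qed

lemma ginner_SM: "SM U w \<Longrightarrow> SM U w' \<Longrightarrow> SM U (ginner g w w')"
proof -
  assume w: "SM U w" and w': "SM U w'"
  have "SM U (\<lambda>x. \<Sum>i\<in>UNIV. \<Sum>j\<in>UNIV. ginv g x i j * pd i w x * pd j w' x)" by (intro SMI w w'; simp)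
  moreover have "ginner g w w' = (\<lambda>x. \<Sum>i\<in>UNIV. \<Sum>j\<in>UNIV. ginv g x i j * pd i w x * pd j w' x)"
    by (rule ext) (simp add: ginner_def)
  ultimately show ?thesis by simp
qed

lemma rho_SM: "SM U w \<Longrightarrow> SM U (rho w)"
proof -
  assume w: "SM U w"
  have "SM U (\<lambda>x. (- (lap g w x + Jfun g x * w x)) / dimn TYPE('n))" by (intro SMI lap_SM Jfun_SM w; simp)
  moreover have "rho w = (\<lambda>x. (- (lap g w x + Jfun g x * w x)) / dimn TYPE('n))"
    by (rule ext) (simp add: rho_def)
  ultimately show ?thesis by simp
qed

end



lemma HD_eq: "HD i f x D \<Longrightarrow> D = D' \<Longrightarrow> HD i f x D'" by simp

lemma HD_power2: "HD i f x A \<Longrightarrow> HD i (\<lambda>y. (f y)^2) x (2 * f x * A)"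
  unfolding power2_eq_square using HD_mult[of i f x A f A] by (simp add: algebra_simps)

locale QE = RMd U g for U :: "(real^'n::finite) set" and g +
  fixes u v :: "real^'n \<Rightarrow> real" and m lam mu :: real
  assumes u_SM: "SM U u" and v_SM: "SM U v"
    and eq1: "\<forall>x\<in>U. \<forall>i j. tracefree g
               (\<lambda>i j y. u y * v y * ricci g i j y + (m + real CARD('n) - 2) * v y * hess g u i j y
                        - m * u y * hess g v i j y) i j x = 0"
    and eq2: "\<forall>x\<in>U. real CARD('n) * lam * (v x)\<^sup>2 =
               (u x * v x)\<^sup>2 * scal g x + (m + 2* real CARD('n) - 2) * u x * (v x)\<^sup>2 * lap g u x
               - m * (u x)\<^sup>2 * v x * lap g v x - (m + real CARD('n) - 1) * real CARD('n) * (v x)\<^sup>2 * ginner g u u x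
               + m * real CARD('n) * u x * v x * ginner g u v x"
    and eq3: "\<forall>x\<in>U. real CARD('n) * mu * (u x)\<^sup>2 =
               (u x * v x)\<^sup>2 * scal g x + (m + real CARD('n) - 2) * u x * (v x)\<^sup>2 * lap g u x
               - (m - real CARD('n)) * (u x)\<^sup>2 * v x * lap g v x - (m + real CARD('n) - 2) * real CARD('n) * u x * v x * ginner g u v x
               + real CARD('n) * (m - 1) * (u x)\<^sup>2 * ginner g v v x"
begin

lemma E2: assumes x: "x \<in> U"
  shows "v x * (2* u x* v x* (pd a u x* v x+u x* pd a v x)* scal g x+(u x* v x)^2* pd a (scal g) x
       +(m+2* real CARD('n)-2)* ((pd a u x* v x* v x+2* u x* v x* pd a v x)* lap g u x+u x* v x* v x* pd a (lap g u) x)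
       -m* ((2* u x* pd a u x* v x+u x* u x* pd a v x)* lap g v x+u x* u x* v x* pd a (lap g v) x)
       -(m+real CARD('n)-1)* real CARD('n)* (2* v x* pd a v x* ginner g u u x+v x* v x* pd a (ginner g u u) x)
       +m* real CARD('n)* ((pd a u x* v x+u x* pd a v x)* ginner g u v x+u x* v x* pd a (ginner g u v) x))
     = 2 * ((u x * v x)\<^sup>2 * scal g x + (m + 2* real CARD('n) - 2) * u x * (v x)\<^sup>2 * lap g u x
               - m * (u x)\<^sup>2 * v x * lap g v x - (m + real CARD('n) - 1) * real CARD('n) * (v x)\<^sup>2 * ginner g u u x
               + m * real CARD('n) * u x * v x * ginner g u v x) * pd a v x"
  (is "v x * ?D = 2 * ?F * _")
proof -
  have hd: "HD a (\<lambda>x. (u x * v x)\<^sup>2 * scal g x + (m + 2* real CARD('n) - 2) * u x * (v x)\<^sup>2 * lap g u x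
               - m * (u x)\<^sup>2 * v x * lap g v x - (m + real CARD('n) - 1) * real CARD('n) * (v x)\<^sup>2 * ginner g u u x
               + m * real CARD('n) * u x * v x * ginner g u v x) x ?D"
    apply (rule HD_eq)
     apply (rule HD_const HD_add HD_diff HD_mult HD_power2 SM_HD[OF U u_SM x] SM_HD[OF U v_SM x]
        SM_HD[OF U scal_SM x] SM_HD[OF U lap_SM[OF u_SM] x] SM_HD[OF U lap_SM[OF v_SM] x]
        SM_HD[OF U ginner_SM[OF u_SM u_SM] x] SM_HD[OF U ginner_SM[OF u_SM v_SM] x])+
    apply (simp add: power2_eq_square)
    apply algebra
    done
  have hl: "HD a (\<lambda>x. real CARD('n) * lam * (v x)\<^sup>2) x (real CARD('n) * lam * (2 * v x * pd a v x))"
    by (rule HD_eq, (rule HD_const HD_mult HD_power2 SM_HD[OF U v_SM x])+, simp)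
  have "pd a (\<lambda>x. real CARD('n) * lam * (v x)\<^sup>2) x = pd a (\<lambda>x. (u x * v x)\<^sup>2 * scal g x + (m + 2* real CARD('n) - 2) * u x * (v x)\<^sup>2 * lap g u x
               - m * (u x)\<^sup>2 * v x * lap g v x - (m + real CARD('n) - 1) * real CARD('n) * (v x)\<^sup>2 * ginner g u u x
               + m * real CARD('n) * u x * v x * ginner g u v x) x"
    by (rule pd_local[OF U x]) (use eq2 in auto)
  then have "real CARD('n) * lam * (2 * v x * pd a v x) = ?D" using pd_eqI[OF hd] pd_eqI[OF hl] by simp
  moreover have "real CARD('n) * lam * (v x)\<^sup>2 = ?F" using eq2 x by auto
  ultimately show ?thesis by (simp add: power2_eq_square) algebra
qed

lemma E3: assumes x: "x \<in> U"
  shows "u x * (2 * u x * v x * (pd a u x * v x + u x * pd a v x) * scal g x + (u x * v x)^2 * pd a (scal g) x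
       + (m + real CARD('n) - 2) * ((pd a u x * v x * v x + 2 * u x * v x * pd a v x) * lap g u x + u x * v x * v x * pd a (lap g u) x)
       - (m - real CARD('n)) * ((2 * u x * pd a u x * v x + u x * u x * pd a v x) * lap g v x + u x * u x * v x * pd a (lap g v) x)
       - (m + real CARD('n) - 2) * real CARD('n) * ((pd a u x * v x + u x * pd a v x) * ginner g u v x + u x * v x * pd a (ginner g u v) x)
       + real CARD('n) * (m - 1) * (2 * u x * pd a u x * ginner g v v x + u x * u x * pd a (ginner g v v) x))
     = 2 * ((u x * v x)\<^sup>2 * scal g x + (m + real CARD('n) - 2) * u x * (v x)\<^sup>2 * lap g u x
               - (m - real CARD('n)) * (u x)\<^sup>2 * v x * lap g v x - (m + real CARD('n) - 2) * real CARD('n) * u x * v x * ginner g u v x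
               + real CARD('n) * (m - 1) * (u x)\<^sup>2 * ginner g v v x) * pd a u x"
  (is "u x * ?D = 2 * ?F * _")
proof -
  have hd: "HD a (\<lambda>x. (u x * v x)\<^sup>2 * scal g x + (m + real CARD('n) - 2) * u x * (v x)\<^sup>2 * lap g u x
               - (m - real CARD('n)) * (u x)\<^sup>2 * v x * lap g v x - (m + real CARD('n) - 2) * real CARD('n) * u x * v x * ginner g u v x
               + real CARD('n) * (m - 1) * (u x)\<^sup>2 * ginner g v v x) x ?D"
    apply (rule HD_eq)
     apply (rule HD_const HD_add HD_diff HD_mult HD_power2 SM_HD[OF U u_SM x] SM_HD[OF U v_SM x]
        SM_HD[OF U scal_SM x] SM_HD[OF U lap_SM[OF u_SM] x] SM_HD[OF U lap_SM[OF v_SM] x]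
        SM_HD[OF U ginner_SM[OF v_SM v_SM] x] SM_HD[OF U ginner_SM[OF u_SM v_SM] x])+
    apply (simp add: power2_eq_square)
    apply algebra
    done
  have hl: "HD a (\<lambda>x. real CARD('n) * mu * (u x)\<^sup>2) x (real CARD('n) * mu * (2 * u x * pd a u x))"
    by (rule HD_eq, (rule HD_const HD_mult HD_power2 SM_HD[OF U u_SM x])+, simp)
  have "pd a (\<lambda>x. real CARD('n) * mu * (u x)\<^sup>2) x = pd a (\<lambda>x. (u x * v x)\<^sup>2 * scal g x + (m + real CARD('n) - 2) * u x * (v x)\<^sup>2 * lap g u x
               - (m - real CARD('n)) * (u x)\<^sup>2 * v x * lap g v x - (m + real CARD('n) - 2) * real CARD('n) * u x * v x * ginner g u v x
               + real CARD('n) * (m - 1) * (u x)\<^sup>2 * ginner g v v x) x"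
    by (rule pd_local[OF U x]) (use eq3 in auto)
  then have "real CARD('n) * mu * (2 * u x * pd a u x) = ?D" using pd_eqI[OF hd] pd_eqI[OF hl] by simp
  moreover have "real CARD('n) * mu * (u x)\<^sup>2 = ?F" using eq3 x by auto
  ultimately show ?thesis by (simp add: power2_eq_square) algebra
qed

definition T :: "'n \<Rightarrow> 'n \<Rightarrow> real^'n \<Rightarrow> real" where
  "T = (\<lambda>i j y. u y * v y * ricci g i j y + (m + real CARD('n) - 2) * v y * hess g u i j y
                        - m * u y * hess g v i j y)"

lemma tr_eq: "(\<Sum>k\<in>UNIV. \<Sum>l\<in>UNIV. ginv g x k l * T k l x)
   = u x * v x * scal g x + (m + real CARD('n) - 2) * v x * lap g u x - m * u x * lap g v x"
  unfolding T_def scal_def lap_def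
  by (simp add: algebra_simps sum.distrib sum_subtractf sum_distrib_left)

lemma T_eq: assumes x: "x \<in> U"
  shows "T i j x = (u x * v x * scal g x + (m + real CARD('n) - 2) * v x * lap g u x - m * u x * lap g v x)
     / real CARD('n) * g x i j"
  using eq1 x unfolding tracefree_def T_def[symmetric] tr_eq dimn_def by auto

lemma ricci_sch: assumes x: "x \<in> U"
  shows "ricci g i j x = (real CARD('n) - 2) * schouten g i j x + Jfun g x * g x i j"
  using nn_props unfolding schouten_def dimn_def by simp

lemma Cw: assumes x: "x \<in> U"
  shows "u x * v x * ((real CARD('n) - 2) * (\<Sum>c\<in>UNIV. schouten g a c x * grad g w c x) + Jfun g x * pd a w x)
     + (m + real CARD('n) - 2) * v x * (\<Sum>c\<in>UNIV. hess g u a c x * grad g w c x)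
     - m * u x * (\<Sum>c\<in>UNIV. hess g v a c x * grad g w c x)
     = (u x * v x * scal g x + (m + real CARD('n) - 2) * v x * lap g u x - m * u x * lap g v x)
       / real CARD('n) * pd a w x"
proof -
  have gw: "(\<Sum>c\<in>UNIV. g x a c * grad g w c x) = pd a w x"
    using inv_contract2[OF x, of a "\<lambda>c. pd c w x"] by (simp add: grad_def)
  have "(\<Sum>c\<in>UNIV. T a c x * grad g w c x) = (u x * v x * scal g x + (m + real CARD('n) - 2) * v x * lap g u x - m * u x * lap g v x)
       / real CARD('n) * pd a w x"
    unfolding T_eq[OF x] gw[symmetric] by (simp add: sum_distrib_right sum_divide_distrib mult_ac)
  moreover have "(\<Sum>c\<in>UNIV. T a c x * grad g w c x) =
       u x * v x * ((real CARD('n) - 2) * (\<Sum>c\<in>UNIV. schouten g a c x * grad g w c x) + Jfun g x * (\<Sum>c\<in>UNIV. g x a c * grad g w c x))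
     + (m + real CARD('n) - 2) * v x * (\<Sum>c\<in>UNIV. hess g u a c x * grad g w c x)
     - m * u x * (\<Sum>c\<in>UNIV. hess g v a c x * grad g w c x)"
    unfolding T_def ricci_sch[OF x]
    by (simp add: algebra_simps sum.distrib sum_subtractf sum_distrib_left)
  ultimately show ?thesis unfolding gw by simp
qed

end



lemma HD_cdiv: "HD i f x A \<Longrightarrow> HD i (\<lambda>y. f y / c) x (A / c)"
  using HD_mult[OF _ HD_const, of i f x A "1/c"] by simp

context RMd begin

lemma dimn_eq: "dimn TYPE('n) = real CARD('n)" by (simp add: dimn_def)

lemma ID_eq': "fscale (1 / real CARD('n)) (tractorD g 1 w) = (w, grad g w, rho w)"
  using ID_eq by (simp add: dimn_eq)

lemma pd_rho: assumes x: "x \<in> U" and w: "SM U w"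
  shows "pd a (rho w) x = -(pd a (lap g w) x + (pd a (Jfun g) x * w x + Jfun g x * pd a w x)) / real CARD('n)"
proof -
  have "rho w = (\<lambda>x. (- (lap g w x + Jfun g x * w x)) / dimn TYPE('n))"
    by (rule ext) (simp add: rho_def)
  moreover have "HD a (\<lambda>x. (- (lap g w x + Jfun g x * w x)) / dimn TYPE('n)) x
      (-(pd a (lap g w) x + (pd a (Jfun g) x * w x + Jfun g x * pd a w x)) / real CARD('n))"
    by (rule HD_eq, (rule HD_cdiv HD_minus HD_add HD_mult SM_HD[OF U lap_SM[OF w] x] SM_HD[OF U Jfun_SM x] SM_HD[OF U w x])+, simp add: dimn_eq)
  ultimately show ?thesis using pd_eqI by metis
qed

lemma scal_J: "scal g x = 2 * (real CARD('n) - 1) * Jfun g x"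
  using nn_props by (simp add: Jfun_def dimn_eq)

lemma dscal_J: assumes x: "x \<in> U" shows "pd a (scal g) x = 2 * (real CARD('n) - 1) * pd a (Jfun g) x"
proof -
  have "Jfun g = (\<lambda>x. scal g x / (2 * (dimn TYPE('n) - 1)))" by (rule ext) (simp add: Jfun_def)
  then have "HD a (Jfun g) x (pd a (scal g) x / (2 * (dimn TYPE('n) - 1)))"
    using HD_cdiv[OF SM_HD[OF U scal_SM x]] by metis
  then show ?thesis using pd_eqI nn_props by (fastforce simp: dimn_eq)
qed

lemma tmet_fun: assumes y: "y \<in> U"
  shows "tmet g y (tval (w1, grad g w1, rho w1) y) (tval (w2, grad g w2, rho w2) y) = w1 y * rho w2 y + rho w1 y * w2 y + ginner g w1 w2 y"
  unfolding tval_eq tmet_def using tmet_grad[OF y, of "\<lambda>a. grad g w1 a y" w2] ginner_grad[OF y, of w1 w2]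
  by simp

lemma dtmet: assumes x: "x \<in> U" and w1: "SM U w1" and w2: "SM U w2"
  shows "pd a (\<lambda>y. tmet g y (tval (w1, grad g w1, rho w1) y) (tval (w2, grad g w2, rho w2) y)) x
    = pd a w1 x * rho w2 x + w1 x * pd a (rho w2) x + (pd a (rho w1) x * w2 x + rho w1 x * pd a w2 x)
      + ((\<Sum>i\<in>UNIV. hess g w1 a i x * grad g w2 i x) + (\<Sum>i\<in>UNIV. hess g w2 a i x * grad g w1 i x))"
proof -
  have "pd a (\<lambda>y. tmet g y (tval (w1, grad g w1, rho w1) y) (tval (w2, grad g w2, rho w2) y)) x
     = pd a (\<lambda>y. w1 y * rho w2 y + rho w1 y * w2 y + ginner g w1 w2 y) x"
    by (rule pd_local[OF U x]) (rule tmet_fun)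
  also have "\<dots> = pd a w1 x * rho w2 x + w1 x * pd a (rho w2) x + (pd a (rho w1) x * w2 x + rho w1 x * pd a w2 x)
      + pd a (ginner g w1 w2) x"
    by (rule pd_eqI, (rule HD_add HD_mult SM_HD[OF U w1 x] SM_HD[OF U w2 x] SM_HD[OF U rho_SM[OF w1] x]
        SM_HD[OF U rho_SM[OF w2] x] SM_HD[OF U ginner_SM[OF w1 w2] x])+)
  finally show ?thesis unfolding dginner[OF x w1 w2] .
qed

lemma mid_contract: assumes x: "x \<in> U"
  shows "(\<Sum>b\<in>UNIV. ((\<Sum>c\<in>UNIV. ginv g x b c * X c) + r * (if a = b then 1 else 0)) * pd b w x)
      = (\<Sum>c\<in>UNIV. X c * grad g w c x) + r * pd a w x"
proof -
  have "(\<Sum>b\<in>UNIV. ((\<Sum>c\<in>UNIV. ginv g x b c * X c) + r * (if a = b then 1 else 0)) * pd b w x)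
     = (\<Sum>b\<in>UNIV. \<Sum>c\<in>UNIV. ginv g x b c * X c * pd b w x) + r * pd a w x"
  proof -
    have d: "(\<Sum>b\<in>UNIV. r * (if a = b then 1 else 0) * pd b w x) = r * pd a w x"
    proof -
      have "(\<Sum>b\<in>UNIV. r * (if a = b then 1 else 0) * pd b w x) = (\<Sum>b\<in>UNIV. if a = b then r * pd b w x else 0)"
        by (rule sum.cong) auto
      also have "\<dots> = r * pd a w x" by simp
      finally show ?thesis .
    qed
    show ?thesis unfolding distrib_right sum.distrib d by (simp add: sum_distrib_right)
  qed
  also have "(\<Sum>b\<in>UNIV. \<Sum>c\<in>UNIV. ginv g x b c * X c * pd b w x) = (\<Sum>c\<in>UNIV. \<Sum>b\<in>UNIV. ginv g x b c * X c * pd b w x)"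
    by (rule sum.swap)
  also have "\<dots> = (\<Sum>c\<in>UNIV. X c * grad g w c x)"
    unfolding grad_def using ginv_sym[OF x] by (simp add: sum_distrib_left mult_ac)
  finally show ?thesis .
qed

lemma nXY: assumes x: "x \<in> U" and w1: "SM U w1"
  shows "tmet g x (tconn g (w1, grad g w1, rho w1) a x) (tval (w2, grad g w2, rho w2) x)
    = (pd a (rho w1) x - (\<Sum>c\<in>UNIV. schouten g a c x * grad g w1 c x)) * w2 x
      + ((\<Sum>c\<in>UNIV. hess g w1 a c x * grad g w2 c x) + w1 x * (\<Sum>c\<in>UNIV. schouten g a c x * grad g w2 c x))
      + rho w1 x * pd a w2 x"
proof -
  have "tmet g x (tconn g (w1, grad g w1, rho w1) a x) (tval (w2, grad g w2, rho w2) x)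
     = (pd a (rho w1) x - (\<Sum>c\<in>UNIV. schouten g a c x * grad g w1 c x)) * w2 x
       + (\<Sum>b\<in>UNIV. ((\<Sum>c\<in>UNIV. ginv g x b c * (hess g w1 a c x + w1 x * schouten g a c x)) + rho w1 x * (if a = b then 1 else 0)) * pd b w2 x)"
    unfolding tconn_eq[OF x w1] tval_eq tmet_def
    using tmet_grad[OF x, of "\<lambda>b. (\<Sum>c\<in>UNIV. ginv g x b c * (hess g w1 a c x + w1 x * schouten g a c x)) + rho w1 x * (if a = b then 1 else 0)" w2]
    by simp
  also have "\<dots> = (pd a (rho w1) x - (\<Sum>c\<in>UNIV. schouten g a c x * grad g w1 c x)) * w2 x
      + ((\<Sum>c\<in>UNIV. (hess g w1 a c x + w1 x * schouten g a c x) * grad g w2 c x) + rho w1 x * pd a w2 x)"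
    unfolding mid_contract[OF x] ..
  finally show ?thesis by (simp add: algebra_simps sum.distrib sum_distrib_left)
qed

end



lemma lincomb5: "k  *  G + a  *  X + b  *  Y + c  *  Z + d  *  W = (0::real) \<Longrightarrow> X = 0 \<Longrightarrow> Y = 0 \<Longrightarrow> Z = 0 \<Longrightarrow> W = 0 \<Longrightarrow> k \<noteq> 0 \<Longrightarrow> G = 0"
  by simp

lemma coreB:
  fixes u v m n du dv R dR Lu Lv dLu dLv Nuu Nuv Nvv dNuu dNuv dNvv J dJ Pu Pv Huu Huv Hvu Hvv ru rv dru drv :: real
  assumes n: "n \<noteq> 0" "n - 1 \<noteq> 0"
  and hR: "R = 2 * (n-1) * J" and hdR: "dR = 2 * (n-1) * dJ"
  and hru: "ru = -(Lu + J * u)/n" and hrv: "rv = -(Lv + J * v)/n"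
  and hdru: "dru = -(dLu + (dJ * u + J * du))/n" and hdrv: "drv = -(dLv + (dJ * v + J * dv))/n"
  and hNuu: "dNuu = Huu + Huu" and hNuv: "dNuv = Huv + Hvu" and hNvv: "dNvv = Hvv + Hvv"
  and hE2: "v  *  (2 * u * v * (du * v+u * dv) * R + (u * v)^2 * dR + (m+2 * n-2) * ((du * v * v+2 * u * v * dv) * Lu+u * v * v * dLu) - m * ((2 * u * du * v+u * u * dv) * Lv+u * u * v * dLv) - (m+n-1) * n * (2 * v * dv * Nuu+v * v * dNuu) + m * n * ((du * v+u * dv) * Nuv+u * v * dNuv)) = 2  *  ((u * v)^2 * R + (m+2 * n-2) * u * v^2 * Lu - m * u^2 * v * Lv - (m+n-1) * n * v^2 * Nuu + m * n * u * v * Nuv)  *  dv"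
  and hE3: "u  *  (2 * u * v * (du * v+u * dv) * R + (u * v)^2 * dR + (m+n-2) * ((du * v * v+2 * u * v * dv) * Lu+u * v * v * dLu) - (m-n) * ((2 * u * du * v+u * u * dv) * Lv+u * u * v * dLv) - (m+n-2) * n * ((du * v+u * dv) * Nuv+u * v * dNuv) + n * (m-1) * (2 * u * du * Nvv+u * u * dNvv)) = 2 * ((u * v)^2 * R + (m+n-2) * u * v^2 * Lu - (m-n) * u^2 * v * Lv - (m+n-2) * n * u * v * Nuv + n * (m-1) * u^2 * Nvv) * du"
  and hCu: "u * v * ((n-2) * Pu + J * du) + (m+n-2) * v * Huu - m * u * Hvu = (u * v * R + (m+n-2) * v * Lu - m * u * Lv)/n * du"
  and hCv: "u * v * ((n-2) * Pv + J * dv) + (m+n-2) * v * Huv - m * u * Hvv = (u * v * R + (m+n-2) * v * Lu - m * u * Lv)/n * dv"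
  shows "u^2 * v^2 * ((m+n-2) * v * (dru - Pu) + (-m * u) * (drv - Pv) + (-(1/n) * ((m+n-2) * ((dru - Pu) * v + (Huv + u * Pv) + ru * dv) - m * ((drv - Pv) * u + (Hvu + v * Pu) + rv * du))) * 1) = 0"
proof (rule lincomb5)
  note subs = hR hdR hru hrv hdru hdrv hNuu hNuv hNvv
  show "(2 * n^2)  *  (u^2 * v^2 * ((m+n-2) * v * (dru - Pu) + (-m * u) * (drv - Pv) + (-(1/n) * ((m+n-2) * ((dru - Pu) * v + (Huv + u * Pv) + ru * dv) - m * ((drv - Pv) * u + (Hvu + v * Pu) + rv * du))) * 1)) + ((m+n-2) * u)  *  (v  *  (2 * u * v * (du * v+u * dv) * R + (u * v)^2 * dR + (m+2 * n-2) * ((du * v * v+2 * u * v * dv) * Lu+u * v * v * dLu) - m * ((2 * u * du * v+u * u * dv) * Lv+u * u * v * dLv) - (m+n-1) * n * (2 * v * dv * Nuu+v * v * dNuu) + m * n * ((du * v+u * dv) * Nuv+u * v * dNuv)) - 2  *  ((u * v)^2 * R + (m+2 * n-2) * u * v^2 * Lu - m * u^2 * v * Lv - (m+n-1) * n * v^2 * Nuu + m * n * u * v * Nuv)  *  dv) + (- m * v)  *  (u  *  (2 * u * v * (du * v+u * dv) * R + (u * v)^2 * dR + (m+n-2) * ((du * v * v+2 * u * v * dv) * Lu+u * v * v * dLu) - (m-n) * ((2 * u * du * v+u * u * dv) * Lv+u * u * v * dLv) - (m+n-2) * n * ((du * v+u * dv) * Nuv+u * v * dNuv) + n * (m-1)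 * (2 * u * du * Nvv+u * u * dNvv)) - 2 * ((u * v)^2 * R + (m+n-2) * u * v^2 * Lu - (m-n) * u^2 * v * Lv - (m+n-2) * n * u * v * Nuv + n * (m-1) * u^2 * Nvv) * du) + (2 * (m+n-1) * u * v^2 * n)  *  (u * v * ((n-2) * Pu + J * du) + (m+n-2) * v * Huu - m * u * Hvu - (u * v * R + (m+n-2) * v * Lu - m * u * Lv)/n * du) + (- 2 * (m-1) * u^2 * v * n)  *  (u * v * ((n-2) * Pv + J * dv) + (m+n-2) * v * Huv - m * u * Hvv - (u * v * R + (m+n-2) * v * Lu - m * u * Lv)/n * dv) = 0"
    unfolding subs using n by (simp add: field_simps) algebra
  show "v  *  (2 * u * v * (du * v+u * dv) * R + (u * v)^2 * dR + (m+2 * n-2) * ((du * v * v+2 * u * v * dv) * Lu+u * v * v * dLu) - m * ((2 * u * du * v+u * u * dv) * Lv+u * u * v * dLv) - (m+n-1) * n * (2 * v * dv * Nuu+v * v * dNuu) + m * n * ((du * v+u * dv) * Nuv+u * v * dNuv)) - 2  *  ((u * v)^2 * R + (m+2 * n-2) * u * v^2 * Lu - m * u^2 * v * Lv - (m+n-1) * n * v^2 * Nuu + m * n * u * v * Nuv)  *  dv = 0" using hE2 by simp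
  show "u  *  (2 * u * v * (du * v+u * dv) * R + (u * v)^2 * dR + (m+n-2) * ((du * v * v+2 * u * v * dv) * Lu+u * v * v * dLu) - (m-n) * ((2 * u * du * v+u * u * dv) * Lv+u * u * v * dLv) - (m+n-2) * n * ((du * v+u * dv) * Nuv+u * v * dNuv) + n * (m-1) * (2 * u * du * Nvv+u * u * dNvv)) - 2 * ((u * v)^2 * R + (m+n-2) * u * v^2 * Lu - (m-n) * u^2 * v * Lv - (m+n-2) * n * u * v * Nuv + n * (m-1) * u^2 * Nvv) * du = 0" using hE3 by simp
  show "u * v * ((n-2) * Pu + J * du) + (m+n-2) * v * Huu - m * u * Hvu - (u * v * R + (m+n-2) * v * Lu - m * u * Lv)/n * du = 0" using hCu by simp
  show "u * v * ((n-2) * Pv + J * dv) + (m+n-2) * v * Huv - m * u * Hvv - (u * v * R + (m+n-2) * v * Lu - m * u * Lv)/n * dv = 0" using hCv by simp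
  show "2 * n^2 \<noteq> 0" using n by simp
qed

lemma coreS:
  fixes u v m n du dv R dR Lu Lv dLu dLv Nuu Nuv Nvv dNuu dNuv dNvv J dJ Pu Pv Huu Huv Hvu Hvv ru rv dru drv :: real
  assumes n: "n \<noteq> 0" "n - 1 \<noteq> 0"
  and hR: "R = 2 * (n-1) * J" and hdR: "dR = 2 * (n-1) * dJ"
  and hru: "ru = -(Lu + J * u)/n" and hrv: "rv = -(Lv + J * v)/n"
  and hdru: "dru = -(dLu + (dJ * u + J * du))/n" and hdrv: "drv = -(dLv + (dJ * v + J * dv))/n"
  and hNuu: "dNuu = Huu + Huu" and hNuv: "dNuv = Huv + Hvu" and hNvv: "dNvv = Hvv + Hvv"
  and hE2: "v  *  (2 * u * v * (du * v+u * dv) * R + (u * v)^2 * dR + (m+2 * n-2) * ((du * v * v+2 * u * v * dv) * Lu+u * v * v * dLu) - m * ((2 * u * du * v+u * u * dv) * Lv+u * u * v * dLv) - (m+n-1) * n * (2 * v * dv * Nuu+v * v * dNuu) + m * n * ((du * v+u * dv) * Nuv+u * v * dNuv)) = 2  *  ((u * v)^2 * R + (m+2 * n-2) * u * v^2 * Lu - m * u^2 * v * Lv - (m+n-1) * n * v^2 * Nuu + m * n * u * v * Nuv)  *  dv"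
  and hE3: "u  *  (2 * u * v * (du * v+u * dv) * R + (u * v)^2 * dR + (m+n-2) * ((du * v * v+2 * u * v * dv) * Lu+u * v * v * dLu) - (m-n) * ((2 * u * du * v+u * u * dv) * Lv+u * u * v * dLv) - (m+n-2) * n * ((du * v+u * dv) * Nuv+u * v * dNuv) + n * (m-1) * (2 * u * du * Nvv+u * u * dNvv)) = 2 * ((u * v)^2 * R + (m+n-2) * u * v^2 * Lu - (m-n) * u^2 * v * Lv - (m+n-2) * n * u * v * Nuv + n * (m-1) * u^2 * Nvv) * du"
  and hCu: "u * v * ((n-2) * Pu + J * du) + (m+n-2) * v * Huu - m * u * Hvu = (u * v * R + (m+n-2) * v * Lu - m * u * Lv)/n * du"
  and hCv: "u * v * ((n-2) * Pv + J * dv) + (m+n-2) * v * Huv - m * u * Hvv = (u * v * R + (m+n-2) * v * Lu - m * u * Lv)/n * dv"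
  shows "u^2 * v^2 * (m * n * (m+n-2) * (u * rv + ru * v + Nuv) * (v * du - u * dv) - m * (m+n-2) * (2 * m+n-2) * u * v * (du * rv + u * drv + dru * v + ru * dv + (Huv + Hvu)) + 2 * (m-1) * (m+n-1) * (m+n-2) * u * v * ((dru - Pu) * v + (Huv + u * Pv) + ru * dv) + 2 * m * (m-1) * (m+n-1) * u * v * ((drv - Pv) * u + (Hvu + v * Pu) + rv * du)) = 0"
proof (rule lincomb5)
  note subs = hR hdR hru hrv hdru hdrv hNuu hNuv hNvv
  show "(2 * n^2)  *  (u^2 * v^2 * (m * n * (m+n-2) * (u * rv + ru * v + Nuv) * (v * du - u * dv) - m * (m+n-2) * (2 * m+n-2) * u * v * (du * rv + u * drv + dru * v + ru * dv + (Huv + Hvu)) + 2 * (m-1) * (m+n-1) * (m+n-2) * u * v * ((dru - Pu) * v + (Huv + u * Pv) + ru * dv) + 2 * m * (m-1) * (m+n-1) * u * v * ((drv - Pv) * u + (Hvu + v * Pu) + rv * du))) + (2 * n * (m-1) * (m+n-2) * u^2 * v)  *  (v  *  (2 * u * v * (du * v+u * dv) * R + (u * v)^2 * dR + (m+2 * n-2) * ((du * v * v+2 * u * v * dv) * Lu+u * v * v * dLu) - m * ((2 * u * du * v+u * u * dv) * Lv+u * u * v * dLv) - (m+n-1) * n * (2 * v * dv * Nuu+v * v * dNuu) + m * n * ((du * v+u * dv) * Nuv+u * v * dNuv)) - 2  *  ((u * v)^2 * R + (m+2 * n-2) * u * v^2 * Lu - m * u^2 * v * Lv - (m+n-1) *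 n * v^2 * Nuu + m * n * u * v * Nuv)  *  dv) + (- 2 * m * n * (m+n-1) * u * v^2)  *  (u  *  (2 * u * v * (du * v+u * dv) * R + (u * v)^2 * dR + (m+n-2) * ((du * v * v+2 * u * v * dv) * Lu+u * v * v * dLu) - (m-n) * ((2 * u * du * v+u * u * dv) * Lv+u * u * v * dLv) - (m+n-2) * n * ((du * v+u * dv) * Nuv+u * v * dNuv) + n * (m-1) * (2 * u * du * Nvv+u * u * dNvv)) - 2 * ((u * v)^2 * R + (m+n-2) * u * v^2 * Lu - (m-n) * u^2 * v * Lv - (m+n-2) * n * u * v * Nuv + n * (m-1) * u^2 * Nvv) * du) + (4 * n * (m-1) * (m+n-1) * u^2 * v^3 * n)  *  (u * v * ((n-2) * Pu + J * du) + (m+n-2) * v * Huu - m * u * Hvu - (u * v * R + (m+n-2) * v * Lu - m * u * Lv)/n * du) + (- 4 * n * (m-1) * (m+n-1) * u^3 * v^2 * n)  *  (u * v * ((n-2) * Pv + J * dv) + (m+n-2) * v * Huv - m * u * Hvv - (u * v * R + (m+n-2) * v * Lu - m * u * Lv)/n * dv) = 0"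
    unfolding subs using n by (simp add: field_simps) algebra
  show "v  *  (2 * u * v * (du * v+u * dv) * R + (u * v)^2 * dR + (m+2 * n-2) * ((du * v * v+2 * u * v * dv) * Lu+u * v * v * dLu) - m * ((2 * u * du * v+u * u * dv) * Lv+u * u * v * dLv) - (m+n-1) * n * (2 * v * dv * Nuu+v * v * dNuu) + m * n * ((du * v+u * dv) * Nuv+u * v * dNuv)) - 2  *  ((u * v)^2 * R + (m+2 * n-2) * u * v^2 * Lu - m * u^2 * v * Lv - (m+n-1) * n * v^2 * Nuu + m * n * u * v * Nuv)  *  dv = 0" using hE2 by simp
  show "u  *  (2 * u * v * (du * v+u * dv) * R + (u * v)^2 * dR + (m+n-2) * ((du * v * v+2 * u * v * dv) * Lu+u * v * v * dLu) - (m-n) * ((2 * u * du * v+u * u * dv) * Lv+u * u * v * dLv) - (m+n-2) * n * ((du * v+u * dv) * Nuv+u * v * dNuv) + n * (m-1) * (2 * u * du * Nvv+u * u * dNvv)) - 2 * ((u * v)^2 * R + (m+n-2) * u * v^2 * Lu - (m-n) * u^2 * v * Lv - (m+n-2) * n * u * v * Nuv + n * (m-1) * u^2 * Nvv) * du = 0" using hE3 by simp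
  show "u * v * ((n-2) * Pu + J * du) + (m+n-2) * v * Huu - m * u * Hvu - (u * v * R + (m+n-2) * v * Lu - m * u * Lv)/n * du = 0" using hCu by simp
  show "u * v * ((n-2) * Pv + J * dv) + (m+n-2) * v * Huv - m * u * Hvv - (u * v * R + (m+n-2) * v * Lu - m * u * Lv)/n * dv = 0" using hCv by simp
  show "2 * n^2 \<noteq> 0" using n by simp
qed



context QE begin

definition Ps :: "'n \<Rightarrow> (real^'n \<Rightarrow> real) \<Rightarrow> real^'n \<Rightarrow> real" where
  "Ps a w x = (\<Sum>c\<in>UNIV. schouten g a c x * grad g w c x)"
definition Hs :: "'n \<Rightarrow> (real^'n \<Rightarrow> real) \<Rightarrow> (real^'n \<Rightarrow> real) \<Rightarrow> real^'n \<Rightarrow> real" where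
  "Hs a w1 w2 x = (\<Sum>c\<in>UNIV. hess g w1 a c x * grad g w2 c x)"
definition nI where
  "nI a x = (pd a (rho u) x - Ps a u x) * v x + (Hs a u v x + u x * Ps a v x) + rho u x * pd a v x"
definition nJ where
  "nJ a x = (pd a (rho v) x - Ps a v x) * u x + (Hs a v u x + v x * Ps a u x) + rho v x * pd a u x"
definition Bfun where
  "Bfun a x = (m + real CARD('n) - 2) * v x * (pd a (rho u) x - Ps a u x) + (- m * u x) * (pd a (rho v) x - Ps a v x)
     + (- (1 / real CARD('n)) * ((m + real CARD('n) - 2) * nI a x - m * nJ a x)) * 1"
definition Sfun where
  "Sfun a x = m * real CARD('n) * (m + real CARD('n) - 2) * (u x * rho v x + rho u x * v x + ginner g u v x)
       * (v x * pd a u x - u x * pd a v x)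
     - m * (m + real CARD('n) - 2) * (2*m + real CARD('n) - 2) * u x * v x
       * (pd a u x * rho v x + u x * pd a (rho v) x + (pd a (rho u) x * v x + rho u x * pd a v x)
          + (Hs a u v x + Hs a v u x))
     + 2 * (m - 1) * (m + real CARD('n) - 1) * (m + real CARD('n) - 2) * u x * v x * nI a x
     + 2 * m * (m - 1) * (m + real CARD('n) - 1) * u x * v x * nJ a x"

lemma rho_val: "rho w x = -(lap g w x + Jfun g x * w x) / real CARD('n)"
  by (simp add: rho_def dimn_eq)

lemma dginner': assumes "x \<in> U" "SM U w1" "SM U w2"
  shows "pd a (ginner g w1 w2) x = Hs a w1 w2 x + Hs a w2 w1 x"
  using dginner[OF assms] by (simp add: Hs_def)

lemma B_poly: assumes x: "x \<in> U"
  shows "(u x)^2 * (v x)^2 * Bfun a x = 0"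
proof -
  note nn = nn_props[unfolded dimn_eq]
  have "(u x)^2 * (v x)^2 * ((m + real CARD('n) - 2) * v x * (pd a (rho u) x - Ps a u x) + (- m * u x) * (pd a (rho v) x - Ps a v x)
     + (- (1 / real CARD('n)) * ((m + real CARD('n) - 2) * ((pd a (rho u) x - Ps a u x) * v x + (Hs a u v x + u x * Ps a v x) + rho u x * pd a v x)
        - m * ((pd a (rho v) x - Ps a v x) * u x + (Hs a v u x + v x * Ps a u x) + rho v x * pd a u x))) * 1) = 0"
    apply (rule coreB[of "real CARD('n)" "scal g x" "Jfun g x" "pd a (scal g) x" "pd a (Jfun g) x"
          "rho u x" "lap g u x" "u x" "rho v x" "lap g v x" "v x" "pd a (rho u) x" "pd a (lap g u) x" "pd a u x"
          "pd a (rho v) x" "pd a (lap g v) x" "pd a v x" "pd a (ginner g u u) x" "Hs a u u x"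
          "pd a (ginner g u v) x" "Hs a u v x" "Hs a v u x" "pd a (ginner g v v) x" "Hs a v v x"])
    using nn apply simp
    using nn apply simp
    apply (rule scal_J)
    apply (rule dscal_J[OF x])
    apply (rule rho_val)
    apply (rule rho_val)
    apply (rule pd_rho[OF x u_SM])
    apply (rule pd_rho[OF x v_SM])
    apply (rule dginner'[OF x u_SM u_SM])
    apply (rule dginner'[OF x u_SM v_SM])
    apply (rule dginner'[OF x v_SM v_SM])
    using E2[OF x, of a] apply (simp only: power2_eq_square)
    using E3[OF x, of a] apply (simp only: power2_eq_square)
    using Cw[OF x, of a u] apply (simp add: Ps_def Hs_def)
    using Cw[OF x, of a v] apply (simp add: Ps_def Hs_def)
    done
  then show ?thesis unfolding Bfun_def nI_def nJ_def .
qed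

lemma S_poly: assumes x: "x \<in> U"
  shows "(u x)^2 * (v x)^2 * Sfun a x = 0"
proof -
  note nn = nn_props[unfolded dimn_eq]
  have "(u x)^2 * (v x)^2 * (m * real CARD('n) * (m + real CARD('n) - 2) * (u x * rho v x + rho u x * v x + ginner g u v x) * (v x * pd a u x - u x * pd a v x)
     - m * (m + real CARD('n) - 2) * (2 * m + real CARD('n) - 2) * u x * v x * (pd a u x * rho v x + u x * pd a (rho v) x + pd a (rho u) x * v x + rho u x * pd a v x + (Hs a u v x + Hs a v u x))
     + 2 * (m - 1) * (m + real CARD('n) - 1) * (m + real CARD('n) - 2) * u x * v x * ((pd a (rho u) x - Ps a u x) * v x + (Hs a u v x + u x * Ps a v x) + rho u x * pd a v x)
     + 2 * m * (m - 1) * (m + real CARD('n) - 1) * u x * v x * ((pd a (rho v) x - Ps a v x) * u x + (Hs a v u x + v x * Ps a u x) + rho v x * pd a u x)) = 0"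
    apply (rule coreS[of "real CARD('n)" "scal g x" "Jfun g x" "pd a (scal g) x" "pd a (Jfun g) x"
          "rho u x" "lap g u x" "u x" "rho v x" "lap g v x" "v x" "pd a (rho u) x" "pd a (lap g u) x" "pd a u x"
          "pd a (rho v) x" "pd a (lap g v) x" "pd a v x" "pd a (ginner g u u) x" "Hs a u u x"
          "pd a (ginner g u v) x" "Hs a u v x" "Hs a v u x" "pd a (ginner g v v) x" "Hs a v v x"])
    using nn apply simp
    using nn apply simp
    apply (rule scal_J)
    apply (rule dscal_J[OF x])
    apply (rule rho_val)
    apply (rule rho_val)
    apply (rule pd_rho[OF x u_SM])
    apply (rule pd_rho[OF x v_SM])
    apply (rule dginner'[OF x u_SM u_SM])
    apply (rule dginner'[OF x u_SM v_SM])
    apply (rule dginner'[OF x v_SM v_SM])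
    using E2[OF x, of a] apply (simp only: power2_eq_square)
    using E3[OF x, of a] apply (simp only: power2_eq_square)
    using Cw[OF x, of a u] apply (simp add: Ps_def Hs_def)
    using Cw[OF x, of a v] apply (simp add: Ps_def Hs_def)
    done
  then show ?thesis unfolding Sfun_def nI_def nJ_def by (simp add: algebra_simps)
qed


lemma sum_lin2: fixes k1 k2 :: real shows "k1 * (\<Sum>c\<in>S. G c * X c) + k2 * (\<Sum>c\<in>S. G c * Y c) = (\<Sum>c\<in>S. G c * (k1 * X c + k2 * Y c))"
proof -
  have "(\<Sum>c\<in>S. G c * (k1 * X c + k2 * Y c)) = (\<Sum>c\<in>S. k1 * (G c * X c) + k2 * (G c * Y c))"
    by (rule sum.cong) (simp_all add: algebra_simps)
  also have "\<dots> = k1 * (\<Sum>c\<in>S. G c * X c) + k2 * (\<Sum>c\<in>S. G c * Y c)"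
    by (simp add: sum.distrib sum_distrib_left)
  finally show ?thesis by simp
qed

lemma mid_zero: assumes x: "x \<in> U"
  shows "(m + real CARD('n) - 2) * v x * ((\<Sum>c\<in>UNIV. ginv g x b c * (hess g u a c x + u x * schouten g a c x)) + rho u x * (if a = b then 1 else 0))
    + (- m * u x) * ((\<Sum>c\<in>UNIV. ginv g x b c * (hess g v a c x + v x * schouten g a c x)) + rho v x * (if a = b then 1 else 0)) = 0"
proof -
  note nn = nn_props[unfolded dimn_eq]
  define tau where "tau = (u x * v x * scal g x + (m + real CARD('n) - 2) * v x * lap g u x - m * u x * lap g v x) / real CARD('n)"
  have pc: "(m + real CARD('n) - 2) * v x * (hess g u a c x + u x * schouten g a c x) + (- m * u x) * (hess g v a c x + v x * schouten g a c x)
      = (tau - u x * v x * Jfun g x) * g x a c" for c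
  proof -
    have "T a c x = tau * g x a c" unfolding T_eq[OF x] tau_def by simp
    moreover have "T a c x = u x * v x * ((real CARD('n) - 2) * schouten g a c x + Jfun g x * g x a c)
        + (m + real CARD('n) - 2) * v x * hess g u a c x - m * u x * hess g v a c x"
      unfolding T_def ricci_sch[OF x] by simp
    ultimately show ?thesis by (simp add: algebra_simps)
  qed
  have "(m + real CARD('n) - 2) * v x * (\<Sum>c\<in>UNIV. ginv g x b c * (hess g u a c x + u x * schouten g a c x))
      + (- m * u x) * (\<Sum>c\<in>UNIV. ginv g x b c * (hess g v a c x + v x * schouten g a c x))
      = (\<Sum>c\<in>UNIV. ginv g x b c * ((m + real CARD('n) - 2) * v x * (hess g u a c x + u x * schouten g a c x) + (- m * u x) * (hess g v a c x + v x * schouten g a c x)))"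
    by (rule sum_lin2)
  also have "\<dots> = (tau - u x * v x * Jfun g x) * (\<Sum>c\<in>UNIV. ginv g x b c * g x c a)"
    unfolding pc using g_sym[OF x] by (simp add: sum_distrib_left mult_ac)
  also have "\<dots> = (tau - u x * v x * Jfun g x) * (if b = a then 1 else 0)" unfolding inv_l[OF x] ..
  finally have s: "(m + real CARD('n) - 2) * v x * (\<Sum>c\<in>UNIV. ginv g x b c * (hess g u a c x + u x * schouten g a c x))
      + (- m * u x) * (\<Sum>c\<in>UNIV. ginv g x b c * (hess g v a c x + v x * schouten g a c x))
      = (tau - u x * v x * Jfun g x) * (if b = a then 1 else 0)" .
  have z: "tau - u x * v x * Jfun g x + (m + real CARD('n) - 2) * v x * rho u x + (- m * u x) * rho v x = 0"
    unfolding tau_def rho_val scal_J using nn by (simp add: field_simps)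
  show ?thesis
  proof (cases "a = b")
    case True
    then show ?thesis using s z by (simp add: algebra_simps)
  next
    case False
    then show ?thesis using s by (simp add: algebra_simps)
  qed
qed



end



context QE begin

lemma zero_pd: assumes "open W" "\<forall>y\<in>W. f y = 0" "y \<in> W" shows "pd i f y = 0"
  using pd_local[OF assms(1) assms(3), of f "\<lambda>y. 0" i] assms(2) by (simp add: pd_const_fun)

lemma zero_atoms: assumes W: "open W" and x: "x \<in> W" and z: "\<forall>y\<in>W. w y = 0"
  shows "w x = 0" "pd i w x = 0" "rho w x = 0" "pd i (rho w) x = 0" "grad g w c x = 0"
    "ginner g w w' x = 0" "ginner g w' w x = 0" "Ps a w x = 0" "Hs a w w' x = 0" "Hs a w' w x = 0"
proof -
  have d1: "\<forall>y\<in>W. pd i w y = 0" for i using zero_pd[OF W z] by blast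
  have d2: "\<forall>y\<in>W. pd i (pd j w) y = 0" for i j using zero_pd[OF W d1] by blast
  have h: "\<forall>y\<in>W. hess g w i j y = 0" for i j using d1 d2 by (simp add: hess_def)
  have l: "\<forall>y\<in>W. lap g w y = 0" using h by (simp add: lap_def)
  have r: "\<forall>y\<in>W. rho w y = 0" using l z by (simp add: rho_val)
  have gr: "\<forall>y\<in>W. grad g w c y = 0" for c using d1 by (simp add: grad_def)
  show "w x = 0" "pd i w x = 0" "rho w x = 0" "grad g w c x = 0" using x z d1 r gr by auto
  show "pd i (rho w) x = 0" using zero_pd[OF W r x] .
  show "ginner g w w' x = 0" "ginner g w' w x = 0" using x d1 by (simp_all add: ginner_def)
  show "Ps a w x = 0" "Hs a w' w x = 0" using x gr by (simp_all add: Ps_def Hs_def)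
  show "Hs a w w' x = 0" using x h by (simp add: Hs_def)
qed

lemma triv_u: assumes W: "open W" and x: "x \<in> W" and z: "\<forall>y\<in>W. u y = 0"
  shows "Bfun a x = 0" "Sfun a x = 0"
  using zero_atoms[OF W x z] by (simp_all add: Bfun_def Sfun_def nI_def nJ_def)

lemma triv_v: assumes W: "open W" and x: "x \<in> W" and z: "\<forall>y\<in>W. v y = 0"
  shows "Bfun a x = 0" "Sfun a x = 0"
  using zero_atoms[OF W x z] by (simp_all add: Bfun_def Sfun_def nI_def nJ_def)


lemma Bfun_SM: "SM U (Bfun a)"
proof -
  have "SM U (\<lambda>x. (m + real CARD('n) - 2) * v x * (pd a (rho u) x - (\<Sum>c\<in>UNIV. schouten g a c x * grad g u c x))
     + (- m * u x) * (pd a (rho v) x - (\<Sum>c\<in>UNIV. schouten g a c x * grad g v c x))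
     + (- (1 / real CARD('n)) * ((m + real CARD('n) - 2) *
         ((pd a (rho u) x - (\<Sum>c\<in>UNIV. schouten g a c x * grad g u c x)) * v x
          + ((\<Sum>c\<in>UNIV. hess g u a c x * grad g v c x) + u x * (\<Sum>c\<in>UNIV. schouten g a c x * grad g v c x)) + rho u x * pd a v x)
       - m * ((pd a (rho v) x - (\<Sum>c\<in>UNIV. schouten g a c x * grad g v c x)) * u x
          + ((\<Sum>c\<in>UNIV. hess g v a c x * grad g u c x) + v x * (\<Sum>c\<in>UNIV. schouten g a c x * grad g u c x)) + rho v x * pd a u x))) * 1)"
    by (intro SMI u_SM v_SM rho_SM schouten_SM grad_SM hess_SM) auto
  moreover have "Bfun a = (\<lambda>x. (m + real CARD('n) - 2) * v x * (pd a (rho u) x - (\<Sum>c\<in>UNIV. schouten g a c x * grad g u c x))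
     + (- m * u x) * (pd a (rho v) x - (\<Sum>c\<in>UNIV. schouten g a c x * grad g v c x))
     + (- (1 / real CARD('n)) * ((m + real CARD('n) - 2) *
         ((pd a (rho u) x - (\<Sum>c\<in>UNIV. schouten g a c x * grad g u c x)) * v x
          + ((\<Sum>c\<in>UNIV. hess g u a c x * grad g v c x) + u x * (\<Sum>c\<in>UNIV. schouten g a c x * grad g v c x)) + rho u x * pd a v x)
       - m * ((pd a (rho v) x - (\<Sum>c\<in>UNIV. schouten g a c x * grad g v c x)) * u x
          + ((\<Sum>c\<in>UNIV. hess g v a c x * grad g u c x) + v x * (\<Sum>c\<in>UNIV. schouten g a c x * grad g u c x)) + rho v x * pd a u x))) * 1)"
    by (rule ext) (simp only: Bfun_def nI_def nJ_def Ps_def Hs_def)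
  ultimately show ?thesis by simp
qed

lemma Sfun_SM: "SM U (Sfun a)"
proof -
  have "SM U (\<lambda>x. m * real CARD('n) * (m + real CARD('n) - 2) * (u x * rho v x + rho u x * v x + ginner g u v x)
       * (v x * pd a u x - u x * pd a v x)
     - m * (m + real CARD('n) - 2) * (2*m + real CARD('n) - 2) * u x * v x
       * (pd a u x * rho v x + u x * pd a (rho v) x + (pd a (rho u) x * v x + rho u x * pd a v x)
          + ((\<Sum>c\<in>UNIV. hess g u a c x * grad g v c x) + (\<Sum>c\<in>UNIV. hess g v a c x * grad g u c x)))
     + 2 * (m - 1) * (m + real CARD('n) - 1) * (m + real CARD('n) - 2) * u x * v x *
         ((pd a (rho u) x - (\<Sum>c\<in>UNIV. schouten g a c x * grad g u c x)) * v x
          + ((\<Sum>c\<in>UNIV. hess g u a c x * grad g v c x) + u x * (\<Sum>c\<in>UNIV. schouten g a c x * grad g v c x)) + rho u x * pd a v x)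
     + 2 * m * (m - 1) * (m + real CARD('n) - 1) * u x * v x *
         ((pd a (rho v) x - (\<Sum>c\<in>UNIV. schouten g a c x * grad g v c x)) * u x
          + ((\<Sum>c\<in>UNIV. hess g v a c x * grad g u c x) + v x * (\<Sum>c\<in>UNIV. schouten g a c x * grad g u c x)) + rho v x * pd a u x))"
    by (intro SMI u_SM v_SM rho_SM schouten_SM grad_SM hess_SM ginner_SM) auto
  moreover have "Sfun a = (\<lambda>x. m * real CARD('n) * (m + real CARD('n) - 2) * (u x * rho v x + rho u x * v x + ginner g u v x)
       * (v x * pd a u x - u x * pd a v x)
     - m * (m + real CARD('n) - 2) * (2*m + real CARD('n) - 2) * u x * v x
       * (pd a u x * rho v x + u x * pd a (rho v) x + (pd a (rho u) x * v x + rho u x * pd a v x)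
          + ((\<Sum>c\<in>UNIV. hess g u a c x * grad g v c x) + (\<Sum>c\<in>UNIV. hess g v a c x * grad g u c x)))
     + 2 * (m - 1) * (m + real CARD('n) - 1) * (m + real CARD('n) - 2) * u x * v x *
         ((pd a (rho u) x - (\<Sum>c\<in>UNIV. schouten g a c x * grad g u c x)) * v x
          + ((\<Sum>c\<in>UNIV. hess g u a c x * grad g v c x) + u x * (\<Sum>c\<in>UNIV. schouten g a c x * grad g v c x)) + rho u x * pd a v x)
     + 2 * m * (m - 1) * (m + real CARD('n) - 1) * u x * v x *
         ((pd a (rho v) x - (\<Sum>c\<in>UNIV. schouten g a c x * grad g v c x)) * u x
          + ((\<Sum>c\<in>UNIV. hess g v a c x * grad g u c x) + v x * (\<Sum>c\<in>UNIV. schouten g a c x * grad g u c x)) + rho v x * pd a u x))"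
    by (rule ext) (simp only: Sfun_def nI_def nJ_def Ps_def Hs_def)
  ultimately show ?thesis by simp
qed


end



lemma density:
  fixes f u v :: "real^'n::finite \<Rightarrow> real"
  assumes U: "open U" and cf: "continuous_on U f" and cu: "continuous_on U u"
  and h1: "\<And>x. x \<in> U \<Longrightarrow> u x \<noteq> 0 \<Longrightarrow> v x \<noteq> 0 \<Longrightarrow> f x = 0"
  and h2: "\<And>x W. open W \<Longrightarrow> x \<in> W \<Longrightarrow> (\<forall>y\<in>W. u y = 0) \<Longrightarrow> f x = 0"
  and h3: "\<And>x W. open W \<Longrightarrow> x \<in> W \<Longrightarrow> (\<forall>y\<in>W. v y = 0) \<Longrightarrow> f x = 0"
  and x: "x \<in> U"
  shows "f x = 0"
proof (rule ccontr)
  assume fx: "f x \<noteq> 0"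
  define W where "W = f -` (-{0}) \<inter> U"
  have o0: "open (-{0::real})" by (rule open_Compl) simp
  have oW: "open W" unfolding W_def using continuous_on_open_vimage[OF U, of f] cf o0 by blast
  have xW: "x \<in> W" using fx x by (simp add: W_def)
  have WU: "W \<subseteq> U" by (auto simp: W_def)
  show False
  proof (cases "\<exists>y\<in>W. u y \<noteq> 0")
    case True
    then obtain y where y: "y \<in> W" "u y \<noteq> 0" by blast
    define W2 where "W2 = u -` (-{0}) \<inter> W"
    have cuW: "continuous_on W u" using continuous_on_subset[OF cu WU] .
    have oW2: "open W2" unfolding W2_def using continuous_on_open_vimage[OF oW, of u] cuW o0 by blast
    have yW2: "y \<in> W2" using y by (simp add: W2_def)
    have "\<forall>z\<in>W2. v z = 0"
    proof
      fix z assume z: "z \<in> W2"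
      then have "z \<in> U" "u z \<noteq> 0" "f z \<noteq> 0" using WU by (auto simp: W2_def W_def)
      then show "v z = 0" using h1 by blast
    qed
    then have "f y = 0" using h3[OF oW2 yW2] by blast
    moreover have "f y \<noteq> 0" using y by (simp add: W_def)
    ultimately show False by simp
  next
    case False
    then have "f x = 0" using h2[OF oW xW] by blast
    then show False using fx by simp
  qed
qed

context QE begin

lemma BS_zero: assumes x: "x \<in> U" shows "Bfun a x = 0" "Sfun a x = 0"
proof -
  have cu: "continuous_on U u" using SM_cont[OF U u_SM] .
  show "Bfun a x = 0"
  proof (rule density[OF U SM_cont[OF U Bfun_SM] cu _ _ _ x])
    fix y assume "y \<in> U" "u y \<noteq> 0" "v y \<noteq> 0"
    then show "Bfun a y = 0" using B_poly[of y a] by simp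
  next
    fix y W assume "open W" "y \<in> W" "\<forall>z\<in>W. u z = 0"
    then show "Bfun a y = 0" by (rule triv_u)
  next
    fix y W assume "open W" "y \<in> W" "\<forall>z\<in>W. v z = 0"
    then show "Bfun a y = 0" by (rule triv_v)
  qed
  show "Sfun a x = 0"
  proof (rule density[OF U SM_cont[OF U Sfun_SM] cu _ _ _ x])
    fix y assume "y \<in> U" "u y \<noteq> 0" "v y \<noteq> 0"
    then show "Sfun a y = 0" using S_poly[of y a] by simp
  next
    fix y W assume "open W" "y \<in> W" "\<forall>z\<in>W. u z = 0"
    then show "Sfun a y = 0" by (rule triv_u)
  next
    fix y W assume "open W" "y \<in> W" "\<forall>z\<in>W. v z = 0"
    then show "Sfun a y = 0" by (rule triv_v)
  qed
qed

lemma main: "\<forall>x\<in>U. \<forall>a.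
          (let I = fscale (1/real CARD('n)) (tractorD g 1 u); J = fscale (1/real CARD('n)) (tractorD g 1 v);
               XI = tmet g x Xtr (tval I x); XJ = tmet g x Xtr (tval J x);
               nIJ = tmet g x (tconn g I a x) (tval J x);
               nJI = tmet g x (tconn g J a x) (tval I x)
           in tadd (tadd (tscale ((m + real CARD('n) - 2) * XJ) (tconn g I a x))
                         (tscale (- m * XI) (tconn g J a x)))
                   (tscale (- (1/real CARD('n)) * ((m + real CARD('n) - 2) * nIJ - m * nJI)) Xtr) = tzero
            \<and> m * real CARD('n) * (m + real CARD('n) - 2) * tmet g x (tval I x) (tval J x)
                 * (XJ * pd a (\<lambda>y. tmet g y Xtr (tval I y)) x
                    - XI * pd a (\<lambda>y. tmet g y Xtr (tval J y)) x)
              - m * (m + real CARD('n) - 2) * (2*m + real CARD('n) - 2) * XI * XJ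
                 * pd a (\<lambda>y. tmet g y (tval I y) (tval J y)) x
              + 2 * (m - 1) * (m + real CARD('n) - 1) * (m + real CARD('n) - 2) * XI * XJ * nIJ
              + 2 * m * (m - 1) * (m + real CARD('n) - 1) * XI * XJ * nJI = 0)"
proof (intro ballI allI)
  fix x a assume x: "x \<in> U"
  have fX: "(\<lambda>y. tmet g y Xtr (tval (w, grad g w, rho w) y)) = w" for w
    by (rule ext) (rule tmet_X)
  have B: "Bfun a x = 0" and S: "Sfun a x = 0" using BS_zero[OF x] by auto
  have c1: "tadd (tadd (tscale ((m + real CARD('n) - 2) * v x) (tconn g (u, grad g u, rho u) a x))
                         (tscale (- m * u x) (tconn g (v, grad g v, rho v) a x)))
                   (tscale (- (1/real CARD('n)) * ((m + real CARD('n) - 2) * nI a x - m * nJ a x)) Xtr) = tzero"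
    unfolding tconn_eq[OF x u_SM] tconn_eq[OF x v_SM] tadd_def tscale_def tzero_def Xtr_def
    using mid_zero[OF x, of _ a] B
    by (simp add: fun_eq_iff Bfun_def Ps_def)
  show "let I = fscale (1/real CARD('n)) (tractorD g 1 u); J = fscale (1/real CARD('n)) (tractorD g 1 v);
               XI = tmet g x Xtr (tval I x); XJ = tmet g x Xtr (tval J x);
               nIJ = tmet g x (tconn g I a x) (tval J x);
               nJI = tmet g x (tconn g J a x) (tval I x)
           in tadd (tadd (tscale ((m + real CARD('n) - 2) * XJ) (tconn g I a x))
                         (tscale (- m * XI) (tconn g J a x)))
                   (tscale (- (1/real CARD('n)) * ((m + real CARD('n) - 2) * nIJ - m * nJI)) Xtr) = tzero
            \<and> m * real CARD('n) * (m + real CARD('n) - 2) * tmet g x (tval I x) (tval J x)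
                 * (XJ * pd a (\<lambda>y. tmet g y Xtr (tval I y)) x
                    - XI * pd a (\<lambda>y. tmet g y Xtr (tval J y)) x)
              - m * (m + real CARD('n) - 2) * (2*m + real CARD('n) - 2) * XI * XJ
                 * pd a (\<lambda>y. tmet g y (tval I y) (tval J y)) x
              + 2 * (m - 1) * (m + real CARD('n) - 1) * (m + real CARD('n) - 2) * XI * XJ * nIJ
              + 2 * m * (m - 1) * (m + real CARD('n) - 1) * XI * XJ * nJI = 0"
    unfolding ID_eq' Let_def tmet_X fX nXY[OF x u_SM] nXY[OF x v_SM] tmet_fun[OF x] dtmet[OF x u_SM v_SM]
    using c1 S unfolding nI_def nJ_def Ps_def Hs_def Sfun_def
    by simp
qed

end



theorem proposition4p2:
  fixes U :: "(real^'n::finite) set"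
    and g :: "real^'n \<Rightarrow> 'n \<Rightarrow> 'n \<Rightarrow> real"
    and u v :: "real^'n \<Rightarrow> real"
    and m lam mu :: real
  defines "n \<equiv> real CARD('n)"
  assumes dim: "CARD('n) \<ge> 3"
    and U_open: "open U"
    and metric: "riemannian_metric_on U g"
    and u_smooth: "smooth_on U u"
    and v_smooth: "smooth_on U v"
    and eq1: "\<forall>x\<in>U. \<forall>i j. tracefree g
               (\<lambda>i j y. u y * v y * ricci g i j y + (m + n - 2) * v y * hess g u i j y
                        - m * u y * hess g v i j y) i j x = 0"
    and eq2: "\<forall>x\<in>U. n * lam * (v x)\<^sup>2 =
               (u x * v x)\<^sup>2 * scal g x + (m + 2*n - 2) * u x * (v x)\<^sup>2 * lap g u x
               - m * (u x)\<^sup>2 * v x * lap g v x - (m + n - 1) * n * (v x)\<^sup>2 * ginner g u u x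
               + m * n * u x * v x * ginner g u v x"
    and eq3: "\<forall>x\<in>U. n * mu * (u x)\<^sup>2 =
               (u x * v x)\<^sup>2 * scal g x + (m + n - 2) * u x * (v x)\<^sup>2 * lap g u x
               - (m - n) * (u x)\<^sup>2 * v x * lap g v x - (m + n - 2) * n * u x * v x * ginner g u v x
               + n * (m - 1) * (u x)\<^sup>2 * ginner g v v x"
  shows "\<forall>x\<in>U. \<forall>a.
          (let I = fscale (1/n) (tractorD g 1 u); J = fscale (1/n) (tractorD g 1 v);
               XI = tmet g x Xtr (tval I x); XJ = tmet g x Xtr (tval J x);
               nIJ = tmet g x (tconn g I a x) (tval J x);
               nJI = tmet g x (tconn g J a x) (tval I x)
           in tadd (tadd (tscale ((m + n - 2) * XJ) (tconn g I a x))
                         (tscale (- m * XI) (tconn g J a x)))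
                   (tscale (- (1/n) * ((m + n - 2) * nIJ - m * nJI)) Xtr) = tzero
            \<and> m * n * (m + n - 2) * tmet g x (tval I x) (tval J x)
                 * (XJ * pd a (\<lambda>y. tmet g y Xtr (tval I y)) x
                    - XI * pd a (\<lambda>y. tmet g y Xtr (tval J y)) x)
              - m * (m + n - 2) * (2*m + n - 2) * XI * XJ
                 * pd a (\<lambda>y. tmet g y (tval I y) (tval J y)) x
              + 2 * (m - 1) * (m + n - 1) * (m + n - 2) * XI * XJ * nIJ
              + 2 * m * (m - 1) * (m + n - 1) * XI * XJ * nJI = 0)"
proof -
  interpret Q: QE U g u v m lam mu
  proof unfold_locales
    show "open U" by (rule U_open)
    show "riemannian_metric_on U g" by (rule metric)
    show "3 \<le> CARD('n)" using dim by simp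
    show "SM U u" by (rule smooth_on_SM[OF u_smooth])
    show "SM U v" by (rule smooth_on_SM[OF v_smooth])
    show "\<forall>x\<in>U. \<forall>i j. tracefree g
               (\<lambda>i j y. u y * v y * ricci g i j y + (m + real CARD('n) - 2) * v y * hess g u i j y
                        - m * u y * hess g v i j y) i j x = 0"
      using eq1 unfolding n_def .
    show "\<forall>x\<in>U. real CARD('n) * lam * (v x)\<^sup>2 =
               (u x * v x)\<^sup>2 * scal g x + (m + 2*real CARD('n) - 2) * u x * (v x)\<^sup>2 * lap g u x
               - m * (u x)\<^sup>2 * v x * lap g v x - (m + real CARD('n) - 1) * real CARD('n) * (v x)\<^sup>2 * ginner g u u x
               + m * real CARD('n) * u x * v x * ginner g u v x"
      using eq2 unfolding n_def .
    show "\<forall>x\<in>U. real CARD('n) * mu * (u x)\<^sup>2 =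
               (u x * v x)\<^sup>2 * scal g x + (m + real CARD('n) - 2) * u x * (v x)\<^sup>2 * lap g u x
               - (m - real CARD('n)) * (u x)\<^sup>2 * v x * lap g v x - (m + real CARD('n) - 2) * real CARD('n) * u x * v x * ginner g u v x
               + real CARD('n) * (m - 1) * (u x)\<^sup>2 * ginner g v v x"
      using eq3 unfolding n_def .
  qed
  show ?thesis using Q.main unfolding n_def .
qed

end
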